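(* Let $(V,f)$ be a non-degenerate cubic space of finite residual rank $r$, and fix $v_1,\dots,v_r\in V$ such that $\overline{q}(v_1),\dots,\overline{q}(v_r)$ form a basis of $\overline{Q}$. Given a good table $T$ (with respect to these $v_i$), there is a good table $T'\supset T$ obtained by adding an entry to the final row $u_1,\dots,u_m$.
   Context: $k$ is algebraically closed of characteristic different from $2,3$. For $V$ with basis and dual coordinates $x_i$, $P_n(V)$ is the space of formal, possibly infinite, $k$-linear combinations of degree-$n$ monomials in the $x_i$. The strength of a homogeneous $h\in P_n(V)$, $n\ge1$, is the least $s$ with $h=\sum_{i=1}^s a_ib_i$, $a_i,b_i$ homogeneous of positive degree less than $n$ ($\infty$ if none); $(V,f)$ is non-degenerate if $f$ has infinite strength. $\overline{P}_2(V)$ is $P_2(V)$ modulo the subspace of finite-strength quadratic forms. For $v\in V$, $f_v=\partial_vf\in P_2(V)$ is the directional derivative (in coordinates $\partial_{v_i}f=\partial f/\partial x_i$) and $\overline{q}(v)$ is its image in $\overline{P}_2(V)$; $\overline{Q}=\overline{q}(V)$, and the residual rank of $f$ is $\dim\overline{Q}$. $\langle-,-,-\rangle_f$ is the symmetric trilinear form with $\langle v,v,v\rangle_f=f(v)$; then $f_v(w)=3\langle v,w,w\rangle_f$. A good table (with respect to $v_1,\dots,v_r$) is a finite table with rows $v_i\mid w_{i,1},\dots,w_{i,n_i}$ for $1\le i\le r$ and a final row $u_1,\dots,u_m$ (with $n_i,m\ge0$), entries in $V$, such that: (a) the entries are linearly independent; (b) $\langle v_i,w_{i,j},w_{i,j}\rangle_f=1$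 and $\langle u_i,u_i,u_i\rangle_f=1$ for all indices, and whenever $x,y,z$ are entries with $\langle x,y,z\rangle_f\ne0$ then, up to permutation, either $x=v_i,\ y=z=w_{i,j}$, or $x=y=z=u_i$, or $x,y,z\in\{v_1,\dots,v_r\}$; (c) for every entry $a$ other than $v_1,\dots,v_r$, the quadratic form $f_a$ has finite strength. *)

theory Defs
  imports "HOL-Library.Multiset" "HOL-Computational_Algebra.Polynomial"
begin

text \<open>The vector space V has a basis indexed by the type 'i; an element of V is a
finitely supported coefficient function 'i => 'k.  A formal power series in the dual
coordinates x_i is a function from monomials (multisets over 'i) to coefficients;
P_n(V) consists of those supported on monomials of degree n.\<close>

type_synonym ('i,'k) series = "'i multiset \<Rightarrow> 'k"

definition alg_closed_field :: "'k::field itself \<Rightarrow> bool" where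
  "alg_closed_field _ \<longleftrightarrow> (\<forall>p::'k poly. degree p > 0 \<longrightarrow> (\<exists>x. poly p x = 0))"

definition inV :: "('i \<Rightarrow> 'k::zero) \<Rightarrow> bool" where
  "inV x \<longleftrightarrow> finite {i. x i \<noteq> 0}"

definition homog :: "nat \<Rightarrow> ('i,'k::zero) series \<Rightarrow> bool" where
  "homog d h \<longleftrightarrow> (\<forall>M. size M \<noteq> d \<longrightarrow> h M = 0)"

text \<open>Product of formal power series (Cauchy product on monomials).\<close>
definition smult_series :: "('i,'k::comm_ring_1) series \<Rightarrow> ('i,'k) series \<Rightarrow> ('i,'k) series" where
  "smult_series a b = (\<lambda>M. \<Sum>N\<in>{N. N \<subseteq># M}. a N * b (M - N))"

definition finite_strength :: "nat \<Rightarrow> ('i,'k::comm_ring_1) series \<Rightarrow> bool" where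
  "finite_strength n h \<longleftrightarrow>
     (\<exists>(s::nat) (a::nat \<Rightarrow> ('i,'k) series) (b::nat \<Rightarrow> ('i,'k) series). (\<forall>i<s. \<exists>d e. 0 < d \<and> d < n \<and> 0 < e \<and> e < n \<and> homog d (a i) \<and> homog e (b i))
        \<and> h = (\<lambda>M. \<Sum>i<s. smult_series (a i) (b i) M))"

text \<open>Directional derivative: (d_v h) = sum_i v_i * dh/dx_i.\<close>
definition dderiv :: "('i \<Rightarrow> 'k::comm_ring_1) \<Rightarrow> ('i,'k) series \<Rightarrow> ('i,'k) series" where
  "dderiv v h = (\<lambda>M. \<Sum>i\<in>{i. v i \<noteq> 0}. v i * of_nat (count M i + 1) * h (add_mset i M))"

text \<open>Symmetric trilinear form with <v,v,v>_f = f(v) (for cubic f).\<close>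
definition trilin :: "('i,'k::field) series \<Rightarrow> ('i \<Rightarrow> 'k) \<Rightarrow> ('i \<Rightarrow> 'k) \<Rightarrow> ('i \<Rightarrow> 'k) \<Rightarrow> 'k" where
  "trilin f x y z = dderiv x (dderiv y (dderiv z f)) {#} / 6"

definition lin_indep_list :: "('i \<Rightarrow> 'k::field) list \<Rightarrow> bool" where
  "lin_indep_list xs \<longleftrightarrow>
     (\<forall>c. (\<forall>i. (\<Sum>k<length xs. c k * (xs ! k) i) = 0) \<longrightarrow> (\<forall>k<length xs. c k = 0))"

text \<open>Rows: v_i | w i 0, ..., w i (n i - 1) for i < r; final row u 0, ..., u (m - 1).\<close>
definition table_entries ::
  "(nat \<Rightarrow> 'i \<Rightarrow> 'k) \<Rightarrow> nat \<Rightarrow> (nat \<Rightarrow> nat) \<Rightarrow> (nat \<Rightarrow> nat \<Rightarrow> 'i \<Rightarrow> 'k) \<Rightarrow> (nat \<Rightarrow> 'i \<Rightarrow> 'k) \<Rightarrow> nat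
    \<Rightarrow> ('i \<Rightarrow> 'k) list" where
  "table_entries v r n w u m =
     concat (map (\<lambda>i. v i # map (w i) [0..<n i]) [0..<r]) @ map u [0..<m]"

definition perm3_of :: "'a \<Rightarrow> 'a \<Rightarrow> 'a \<Rightarrow> 'a \<Rightarrow> 'a \<Rightarrow> bool" where
  "perm3_of x y z a b \<longleftrightarrow>
     (x = a \<and> y = b \<and> z = b) \<or> (x = b \<and> y = a \<and> z = b) \<or> (x = b \<and> y = b \<and> z = a)"

definition good_table ::
  "('i,'k::field) series \<Rightarrow> (nat \<Rightarrow> 'i \<Rightarrow> 'k) \<Rightarrow> nat \<Rightarrow> (nat \<Rightarrow> nat) \<Rightarrow> (nat \<Rightarrow> nat \<Rightarrow> 'i \<Rightarrow> 'k)
    \<Rightarrow> (nat \<Rightarrow> 'i \<Rightarrow> 'k) \<Rightarrow> nat \<Rightarrow> bool" where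
  "good_table f v r n w u m \<longleftrightarrow>
     (let E = set (table_entries v r n w u m) in
      (\<forall>x\<in>E. inV x)
    \<and> lin_indep_list (table_entries v r n w u m)
    \<and> (\<forall>i<r. \<forall>j<n i. trilin f (v i) (w i j) (w i j) = 1)
    \<and> (\<forall>j<m. trilin f (u j) (u j) (u j) = 1)
    \<and> (\<forall>x\<in>E. \<forall>y\<in>E. \<forall>z\<in>E. trilin f x y z \<noteq> 0 \<longrightarrow>
          (\<exists>i<r. \<exists>j<n i. perm3_of x y z (v i) (w i j))
        \<or> (\<exists>j<m. x = u j \<and> y = u j \<and> z = u j)
        \<or> (x \<in> v ` {..<r} \<and> y \<in> v ` {..<r} \<and> z \<in> v ` {..<r}))
    \<and> (\<forall>i<r. \<forall>j<n i. finite_strength 2 (dderiv (w i j) f))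
    \<and> (\<forall>j<m. finite_strength 2 (dderiv (u j) f)))"

end

theory Submission
  imports Defs
begin


lemma dderiv_superset:
  assumes "finite S" "{i. v i \<noteq> 0} \<subseteq> S"
  shows "dderiv v h M = (\<Sum>i\<in>S. v i * of_nat (count M i + 1) * h (add_mset i M))"
  unfolding dderiv_def
  by (rule sum.mono_neutral_left) (use assms in auto)

lemma inV_add: "inV (x::'i\<Rightarrow>'k::comm_ring_1) \<Longrightarrow> inV y \<Longrightarrow> inV (\<lambda>i. x i + y i)"
  unfolding inV_def by (rule finite_subset[of _ "{i. x i \<noteq> 0} \<union> {i. y i \<noteq> 0}"]) auto

lemma inV_scale: "inV (x::'i\<Rightarrow>'k::comm_ring_1) \<Longrightarrow> inV (\<lambda>i. t * x i)"
  unfolding inV_def by (rule finite_subset[of _ "{i. x i \<noteq> 0}"]) auto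

lemma dderiv_add_dir:
  assumes "inV x" "inV y"
  shows "dderiv (\<lambda>i. x i + y i) h M = dderiv x h M + dderiv y h M"
proof -
  let ?S = "{i. x i \<noteq> 0} \<union> {i. y i \<noteq> 0}"
  have f: "finite ?S" using assms unfolding inV_def by auto
  show ?thesis
    apply (subst (1 2 3) dderiv_superset[OF f])
    by (auto simp: distrib_right sum.distrib)
qed

lemma dderiv_scale_dir:
  assumes "inV x"
  shows "dderiv (\<lambda>i. t * x i) h M = t * dderiv x h M"
proof -
  let ?S = "{i. x i \<noteq> 0}"
  have f: "finite ?S" using assms unfolding inV_def by auto
  show ?thesis
    apply (subst (1 2) dderiv_superset[OF f])
    by (auto simp: sum_distrib_left mult.assoc)
qed

lemma dderiv_add: "dderiv v (\<lambda>M. a M + b M) M = dderiv v a M + dderiv v b M"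
  unfolding dderiv_def by (simp add: distrib_left sum.distrib)

lemma dderiv_diff: "dderiv v (\<lambda>M. (a M::'k::comm_ring_1) - b M) M = dderiv v a M - dderiv v b M"
  unfolding dderiv_def by (simp add: right_diff_distrib sum_subtractf)

lemma dderiv_cmult: "dderiv v (\<lambda>M. t * a M) M = t * dderiv v a M"
  unfolding dderiv_def by (simp add: sum_distrib_left mult_ac)

lemma dderiv_sum: "dderiv v (\<lambda>M. \<Sum>k\<in>A. F k M) M = (\<Sum>k\<in>A. dderiv v (F k) M)"
  unfolding dderiv_def by (simp add: sum_distrib_left sum.swap[of _ A])

lemma dderiv_comm:
  assumes "inV x" "inV y"
  shows "dderiv x (dderiv y h) M = dderiv y (dderiv x h) M"
proof -
  have fx: "finite {i. x i \<noteq> 0}" and fy: "finite {i. y i \<noteq> 0}" using assms unfolding inV_def by auto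
  have "dderiv x (dderiv y h) M = (\<Sum>i\<in>{i. x i \<noteq> 0}. \<Sum>j\<in>{j. y j \<noteq> 0}.
      x i * of_nat (count M i + 1) * (y j * of_nat (count (add_mset i M) j + 1) * h (add_mset j (add_mset i M))))"
    unfolding dderiv_def by (simp add: sum_distrib_left)
  also have "\<dots> = (\<Sum>j\<in>{j. y j \<noteq> 0}. \<Sum>i\<in>{i. x i \<noteq> 0}.
      y j * of_nat (count M j + 1) * (x i * of_nat (count (add_mset j M) i + 1) * h (add_mset i (add_mset j M))))"
    apply (subst sum.swap)
    apply (rule sum.cong[OF refl])+
    by (cases "i = j") (auto simp: mult_ac add_mset_commute)
  also have "\<dots> = dderiv y (dderiv x h) M"
    unfolding dderiv_def by (simp add: sum_distrib_left)
  finally show ?thesis .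
qed


lemma dderiv_comm_fun: "inV x \<Longrightarrow> inV y \<Longrightarrow> dderiv x (dderiv y h) = dderiv y (dderiv x h)"
  by (rule ext) (rule dderiv_comm)

lemma trilin_swap12: "inV x \<Longrightarrow> inV y \<Longrightarrow> trilin f x y z = trilin f y x z"
  unfolding trilin_def by (simp add: dderiv_comm)

lemma trilin_swap23: "inV y \<Longrightarrow> inV z \<Longrightarrow> trilin f x y z = trilin f x z y"
  unfolding trilin_def by (simp add: dderiv_comm_fun)

lemma trilin_add1: "inV x \<Longrightarrow> inV x' \<Longrightarrow> trilin f (\<lambda>i. x i + x' i) y z = trilin f x y z + trilin f x' y z"
  unfolding trilin_def by (simp add: dderiv_add_dir add_divide_distrib)

lemma trilin_scale1: "inV x \<Longrightarrow> trilin f (\<lambda>i. t * x i) y z = t * trilin f x y z"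
  unfolding trilin_def by (simp add: dderiv_scale_dir)

lemma inV_zero: "inV (\<lambda>i. 0)" unfolding inV_def by simp

lemma inV_sum: "finite A \<Longrightarrow> (\<And>k. k \<in> A \<Longrightarrow> inV (z k)) \<Longrightarrow> inV (\<lambda>i. \<Sum>k\<in>A. c k * (z k i :: 'k::comm_ring_1))"
proof (induction A rule: finite_induct)
  case empty then show ?case by (simp add: inV_zero)
next
  case (insert a A)
  have "inV (\<lambda>i. c a * z a i + (\<Sum>k\<in>A. c k * z k i))"
    by (rule inV_add) (use insert in \<open>auto intro: inV_scale\<close>)
  then show ?case using insert by simp
qed

lemma trilin_zero1: "trilin f (\<lambda>i. 0) y z = 0"
  unfolding trilin_def dderiv_def by simp

lemma trilin_sum1:
  assumes "finite A" "\<And>k. k \<in> A \<Longrightarrow> inV (z k)"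
  shows "trilin f (\<lambda>i. \<Sum>k\<in>A. c k * z k i) y w = (\<Sum>k\<in>A. c k * trilin f (z k) y w)"
  using assms
proof (induction A rule: finite_induct)
  case empty then show ?case by (simp add: trilin_zero1)
next
  case (insert a A)
  have "trilin f (\<lambda>i. c a * z a i + (\<Sum>k\<in>A. c k * z k i)) y w
      = trilin f (\<lambda>i. c a * z a i) y w + trilin f (\<lambda>i. \<Sum>k\<in>A. c k * z k i) y w"
    by (rule trilin_add1) (use insert in \<open>auto intro: inV_scale inV_sum\<close>)
  then show ?case using insert by (simp add: trilin_scale1)
qed



lemma finite_submsets: "finite {N. N \<subseteq># (M::'a multiset)}"
proof -
  have "{N. N \<subseteq># M} \<subseteq> (\<Union>n\<in>{0..size M}. multisets_of_size (set_mset M) n)"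
    by (auto simp: multisets_of_size_def dest: mset_subset_eqD size_mset_mono)
  thus ?thesis by (rule finite_subset) auto
qed

lemma leib_key:
  fixes a b :: "('i,'k::comm_ring_1) series"
  shows "of_nat (count M i + 1) * (\<Sum>N\<in>{N. N \<subseteq># add_mset i M}. a N * b (add_mset i M - N))
   = (\<Sum>N\<in>{N. N \<subseteq># M}. of_nat (count N i + 1) * a (add_mset i N) * b (M - N))
   + (\<Sum>N\<in>{N. N \<subseteq># M}. of_nat (count (M - N) i + 1) * a N * b (add_mset i (M - N)))"
proof -
  let ?P = "{N. N \<subseteq># add_mset i M}"
  let ?X = "\<lambda>N. a N * b (add_mset i M - N)"
  have fP: "finite ?P" by (rule finite_submsets)
  have img: "add_mset i ` {N. N \<subseteq># M} = {N'\<in>?P. i \<in># N'}"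
  proof
    show "add_mset i ` {N. N \<subseteq># M} \<subseteq> {N'\<in>?P. i \<in># N'}" by auto
    show "{N'\<in>?P. i \<in># N'} \<subseteq> add_mset i ` {N. N \<subseteq># M}"
    proof
      fix N' assume h: "N' \<in> {N'\<in>?P. i \<in># N'}"
      then have "N' = add_mset i (N' - {#i#})" by auto
      moreover have "N' - {#i#} \<subseteq># M" using h
        using subset_eq_diff_conv by fastforce
      ultimately show "N' \<in> add_mset i ` {N. N \<subseteq># M}" by blast
    qed
  qed
  have S1: "(\<Sum>N\<in>{N. N \<subseteq># M}. of_nat (count N i + 1) * a (add_mset i N) * b (M - N))
      = (\<Sum>N\<in>{N'\<in>?P. i \<in># N'}. of_nat (count N i) * ?X N)"
    unfolding img[symmetric]
    by (subst sum.reindex) (auto simp: inj_on_def mult.assoc)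
  have set2: "{N. N \<subseteq># M} = {N'\<in>?P. count N' i \<le> count M i}"
    by (auto simp: subseteq_mset_def) (metis le_SucI)
  have S2: "(\<Sum>N\<in>{N. N \<subseteq># M}. of_nat (count (M - N) i + 1) * a N * b (add_mset i (M - N)))
      = (\<Sum>N\<in>{N'\<in>?P. count N' i \<le> count M i}. of_nat (count M i + 1 - count N i) * ?X N)"
    unfolding set2[symmetric]
    apply (rule sum.cong[OF refl])
  proof -
    fix N assume "N \<in> {N. N \<subseteq># M}"
    then have h: "N \<subseteq># M" by simp
    have e1: "count (M - N) i + 1 = count M i + 1 - count N i" using h
      by (smt (verit) add.assoc add.commute add_diff_cancel_right' count_union
    subset_mset.diff_add union_mset_add_mset_right)
    have e2: "add_mset i (M - N) = add_mset i M - N" using h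
      by (metis add_mset_add_single subset_mset.diff_add_assoc2)
    show "of_nat (count (M - N) i + 1) * a N * b (add_mset i (M - N)) = of_nat (count M i + 1 - count N i) * (a N * b (add_mset i M - N))"
      by (simp only: e1 e2 mult.assoc)
  qed
  have "(\<Sum>N\<in>{N'\<in>?P. i \<in># N'}. of_nat (count N i) * ?X N)
      + (\<Sum>N\<in>{N'\<in>?P. count N' i \<le> count M i}. of_nat (count M i + 1 - count N i) * ?X N)
      = (\<Sum>N\<in>?P. (if i \<in># N then of_nat (count N i) * ?X N else 0)
          + (if count N i \<le> count M i then of_nat (count M i + 1 - count N i) * ?X N else 0))"
    unfolding sum.distrib sum.inter_filter[OF fP] by (rule refl)
  also have "\<dots> = (\<Sum>N\<in>?P. of_nat (count M i + 1) * ?X N)"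
  proof (rule sum.cong[OF refl])
    fix N assume "N \<in> ?P"
    then have le: "count N i \<le> count M i + 1"
      by (metis One_nat_def add.right_neutral add_Suc_right add_mset.rep_eq mem_Collect_eq subseteq_mset_def)
    show "(if i \<in># N then of_nat (count N i) * ?X N else 0)
          + (if count N i \<le> count M i then of_nat (count M i + 1 - count N i) * ?X N else 0)
          = of_nat (count M i + 1) * ?X N"
    proof (cases "count N i = 0")
      case True
      then have "\<not> i \<in># N" by (simp add: count_eq_zero_iff)
      then show ?thesis using True by simp
    next
      case False
      then have iN: "i \<in># N" by (simp add: count_eq_zero_iff)
      show ?thesis
      proof (cases "count N i \<le> count M i")
        case True
        then have "of_nat (count N i) + of_nat (count M i + 1 - count N i) = (of_nat (count M i + 1) :: 'k)"
          by (metis le add_diff_inverse_nat not_le of_nat_add)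
        then show ?thesis using iN True by (simp add: distrib_right[symmetric])
      next
        case False
        then have "count N i = count M i + 1" using le by simp
        then show ?thesis using iN False by simp
      qed
    qed
  qed
  finally show ?thesis using S1 S2 by (simp add: sum_distrib_left)
qed


lemma dderiv_smult:
  fixes a b :: "('i,'k::comm_ring_1) series"
  shows "dderiv v (smult_series a b) M = smult_series (dderiv v a) b M + smult_series a (dderiv v b) M"
proof -
  let ?S = "{i. v i \<noteq> 0}"
  have "dderiv v (smult_series a b) M = (\<Sum>i\<in>?S. v i * (of_nat (count M i + 1) *
      (\<Sum>N\<in>{N. N \<subseteq># add_mset i M}. a N * b (add_mset i M - N))))"
    unfolding dderiv_def smult_series_def by (simp add: mult.assoc)
  also have "\<dots> = (\<Sum>i\<in>?S. v i * ((\<Sum>N\<in>{N. N \<subseteq># M}. of_nat (count N i + 1) * a (add_mset i N) * b (M - N))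
   + (\<Sum>N\<in>{N. N \<subseteq># M}. of_nat (count (M - N) i + 1) * a N * b (add_mset i (M - N)))))"
    by (simp only: leib_key)
  also have "\<dots> = (\<Sum>N\<in>{N. N \<subseteq># M}. (\<Sum>i\<in>?S. v i * of_nat (count N i + 1) * a (add_mset i N)) * b (M - N))
     + (\<Sum>N\<in>{N. N \<subseteq># M}. a N * (\<Sum>i\<in>?S. v i * of_nat (count (M - N) i + 1) * b (add_mset i (M - N))))"
    by (simp add: distrib_left sum.distrib sum_distrib_left sum_distrib_right sum.swap[of _ ?S] mult_ac)
  also have "\<dots> = smult_series (dderiv v a) b M + smult_series a (dderiv v b) M"
    unfolding dderiv_def smult_series_def by simp
  finally show ?thesis .
qed


lemma dderiv_smult_fun:
  fixes a b :: "('i,'k::comm_ring_1) series"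
  shows "dderiv v (smult_series a b) = (\<lambda>M. smult_series (dderiv v a) b M + smult_series a (dderiv v b) M)"
  by (rule ext) (rule dderiv_smult)

lemma homog_dderiv: "homog (Suc d) (h::('i,'k::comm_ring_1) series) \<Longrightarrow> homog d (dderiv v h)"
  unfolding homog_def dderiv_def by auto

lemma homog0_dderiv: "homog 0 (h::('i,'k::comm_ring_1) series) \<Longrightarrow> dderiv v h = (\<lambda>M. 0)"
  unfolding homog_def dderiv_def by (rule ext) auto

lemma homog_empty: "homog d h \<Longrightarrow> 0 < d \<Longrightarrow> h {#} = 0"
  unfolding homog_def by auto

lemma smult_empty: "smult_series a b {#} = a {#} * (b {#} :: 'k::comm_ring_1)"
proof -
  have "{N. N \<subseteq># ({#}::'i multiset)} = {{#}}" by auto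
  then show ?thesis unfolding smult_series_def by simp
qed

lemma smult_zero1: "smult_series (\<lambda>M. 0) b = (\<lambda>M. (0::'k::comm_ring_1))"
  unfolding smult_series_def by simp

lemma homog_smult:
  fixes a b :: "('i,'k::comm_ring_1) series"
  assumes "homog d a" "homog e b" shows "homog (d + e) (smult_series a b)"
  unfolding homog_def smult_series_def
proof (intro allI impI)
  fix M :: "'i multiset" assume "size M \<noteq> d + e"
  show "(\<Sum>N\<in>{N. N \<subseteq># M}. a N * b (M - N)) = 0"
  proof (rule sum.neutral, intro ballI)
    fix N assume "N \<in> {N. N \<subseteq># M}"
    then have "size N + size (M - N) = size M"
      by (simp add: size_Diff_submset size_mset_mono)
    then have "size N \<noteq> d \<or> size (M - N) \<noteq> e" using \<open>size M \<noteq> d + e\<close> by auto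
    then show "a N * b (M - N) = 0" using assms unfolding homog_def by auto
  qed
qed

lemma homog_add: "homog d a \<Longrightarrow> homog d b \<Longrightarrow> homog d (\<lambda>M. a M + (b M::'k::comm_ring_1))"
  unfolding homog_def by auto
lemma homog_diff: "homog d a \<Longrightarrow> homog d b \<Longrightarrow> homog d (\<lambda>M. a M - (b M::'k::comm_ring_1))"
  unfolding homog_def by auto
lemma homog_cmult: "homog d a \<Longrightarrow> homog d (\<lambda>M. t * (a M::'k::comm_ring_1))"
  unfolding homog_def by auto

lemma dderiv_add_fun: "dderiv v (\<lambda>M. a M + b M) = (\<lambda>M. dderiv v a M + dderiv v b M)"
  by (rule ext) (rule dderiv_add)

lemma d2_prod11:
  fixes l m :: "('i,'k::comm_ring_1) series"
  assumes "homog 1 l" "homog 1 m"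
  shows "dderiv x (dderiv y (smult_series l m)) {#}
     = dderiv y l {#} * dderiv x m {#} + dderiv x l {#} * dderiv y m {#}"
proof -
  have h0l: "homog 0 (dderiv y l)" "homog 0 (dderiv x l)" using assms homog_dderiv[of 0] by auto
  have h0m: "homog 0 (dderiv y m)" "homog 0 (dderiv x m)" using assms homog_dderiv[of 0] by auto
  have z: "l {#} = 0" "m {#} = 0" using assms homog_empty by auto
  show ?thesis
    by (simp add: dderiv_smult_fun dderiv_add_fun smult_empty homog0_dderiv[OF h0l(1)]
        homog0_dderiv[OF h0m(2)] z smult_zero1 mult_ac)
qed

lemma d3_prod12:
  fixes a b :: "('i,'k::comm_ring_1) series"
  assumes "homog 1 a" "homog 2 b"
  shows "dderiv z (dderiv z (dderiv z (smult_series a b))) {#}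
     = 3 * dderiv z a {#} * dderiv z (dderiv z b) {#}"
proof -
  have h0a: "homog 0 (dderiv z a)" using assms homog_dderiv[of 0] by auto
  have h1b: "homog 1 (dderiv z b)" using assms homog_dderiv[of 1] by (simp add: numeral_2_eq_2)
  have h0b: "homog 0 (dderiv z (dderiv z b))" using h1b homog_dderiv[of 0] by auto
  have z: "a {#} = 0" "b {#} = 0" "dderiv z b {#} = 0"
    using homog_empty[OF assms(1)] homog_empty[OF assms(2)] homog_empty[OF h1b] by auto
  have s: "smult_series (\<lambda>M. 0) b = (\<lambda>M. 0)" "smult_series a (\<lambda>M. 0) = (\<lambda>M. 0)"
    for a b :: "('i,'k) series" unfolding smult_series_def by auto
  have d0: "dderiv z (\<lambda>M. 0) = (\<lambda>M. (0::'k))" unfolding dderiv_def by auto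
  show ?thesis
    by (simp add: dderiv_smult_fun dderiv_add_fun smult_empty homog0_dderiv[OF h0a]
        homog0_dderiv[OF h0b] z s d0 dderiv_cmult algebra_simps)
qed



definition ev :: "'i \<Rightarrow> 'i \<Rightarrow> 'k::zero_neq_one" where "ev i = (\<lambda>j. if j = i then 1 else 0)"

lemma inV_ev: "inV (ev i)" unfolding inV_def ev_def by simp

lemma dderiv_ev: "dderiv (ev i) h M = of_nat (count M i + 1) * (h (add_mset i M)::'k::comm_ring_1)"
proof -
  have "{j. ev i j \<noteq> (0::'k)} = {i}" unfolding ev_def by auto
  then show ?thesis unfolding dderiv_def by (simp add: ev_def)
qed

lemma dderiv_add_dir_fun: "inV x \<Longrightarrow> inV y \<Longrightarrow> dderiv (\<lambda>i. x i + y i) h = (\<lambda>M. dderiv x h M + dderiv y h M)"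
  by (rule ext) (rule dderiv_add_dir)

lemma trilin_add2: "inV y \<Longrightarrow> inV y' \<Longrightarrow> trilin f x (\<lambda>i. y i + y' i) z = trilin f x y z + trilin f x y' z"
  unfolding trilin_def by (simp add: dderiv_add_dir_fun dderiv_add add_divide_distrib)
lemma trilin_add3: "inV z \<Longrightarrow> inV z' \<Longrightarrow> trilin f x y (\<lambda>i. z i + z' i) = trilin f x y z + trilin f x y z'"
  unfolding trilin_def by (simp add: dderiv_add_dir_fun dderiv_add_fun dderiv_add add_divide_distrib)


lemma cube_add:
  assumes a: "inV a" and b: "inV b"
  shows "trilin f (\<lambda>i. a i + b i) (\<lambda>i. a i + b i) (\<lambda>i. a i + b i)
     = trilin f a a a + 3 * trilin f a a b + 3 * trilin f a b b + trilin f b b b"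
proof -
  have p: "trilin f a b a = trilin f a a b" "trilin f b a a = trilin f a a b"
     "trilin f b a b = trilin f a b b" "trilin f b b a = trilin f a b b"
    using a b by (metis trilin_swap12 trilin_swap23)+
  show ?thesis using a b by (simp add: trilin_add1 trilin_add2 trilin_add3 inV_add p)
qed

lemma mixed_add:
  assumes x: "inV x" and y: "inV y" and w: "inV w"
  shows "trilin f (\<lambda>i. x i + y i) (\<lambda>i. x i + y i) w = trilin f x x w + 2 * trilin f x y w + trilin f y y w"
    "trilin f (\<lambda>i. x i + y i) w w = trilin f x w w + trilin f y w w"
proof -
  have p: "trilin f y x w = trilin f x y w" using x y by (metis trilin_swap12)
  show "trilin f (\<lambda>i. x i + y i) (\<lambda>i. x i + y i) w = trilin f x x w + 2 * trilin f x y w + trilin f y y w"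
    using x y by (simp add: trilin_add1 trilin_add2 inV_add p)
  show "trilin f (\<lambda>i. x i + y i) w w = trilin f x w w + trilin f y w w"
    using x y by (simp add: trilin_add1)
qed

lemma polarization:
  assumes x: "inV x" and y: "inV y" and w: "inV w"
  shows "6 * trilin f x y w = trilin f (\<lambda>i. x i + y i + w i) (\<lambda>i. x i + y i + w i) (\<lambda>i. x i + y i + w i)
     - trilin f (\<lambda>i. x i + y i) (\<lambda>i. x i + y i) (\<lambda>i. x i + y i)
     - trilin f (\<lambda>i. x i + w i) (\<lambda>i. x i + w i) (\<lambda>i. x i + w i)
     - trilin f (\<lambda>i. y i + w i) (\<lambda>i. y i + w i) (\<lambda>i. y i + w i)
     + trilin f x x x + trilin f y y y + trilin f w w w"
proof -
  have xy: "inV (\<lambda>i. x i + y i)" using x y by (rule inV_add)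
  have e1: "trilin f (\<lambda>i. x i + y i + w i) (\<lambda>i. x i + y i + w i) (\<lambda>i. x i + y i + w i)
     = trilin f (\<lambda>i. x i + y i) (\<lambda>i. x i + y i) (\<lambda>i. x i + y i)
       + 3 * (trilin f x x w + 2 * trilin f x y w + trilin f y y w)
       + 3 * (trilin f x w w + trilin f y w w) + trilin f w w w"
    using cube_add[OF xy w, of f] mixed_add[OF x y w, of f] by simp
  show ?thesis unfolding e1 cube_add[OF x w] cube_add[OF y w] by (simp add: algebra_simps)
qed

lemma six_nz: assumes "(2::'k::field) \<noteq> 0" "(3::'k) \<noteq> 0" shows "(6::'k) \<noteq> 0"
proof
  assume "(6::'k) = 0"
  moreover have h: "(6::'k) = 2 * 3" by simp
  ultimately have "(2::'k) * 3 = 0" by metis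
  then show False using assms by (simp only: mult_eq_0_iff) blast
qed
lemma size3_obtain:
  assumes "size M = 3" obtains i j k where "M = add_mset k (add_mset j {#i#})"
proof -
  from assms obtain k M1 where "M = add_mset k M1" "size M1 = 2"
    by (metis Suc_eq_numeral Suc_numeral semiring_norm(5) size_add_mset size_eq_Suc_imp_eq_union)
  moreover from \<open>size M1 = 2\<close> obtain j M2 where "M1 = add_mset j M2" "size M2 = 1"
    by (metis Suc_1 Suc_inject size_add_mset size_eq_Suc_imp_eq_union)
  moreover from \<open>size M2 = 1\<close> obtain i where "M2 = {#i#}" by (metis size_1_singleton_mset)
  ultimately show ?thesis using that by blast
qed

lemma cubic_zero:
  fixes g :: "('i,'k::field) series"
  assumes "(2::'k) \<noteq> 0" "(3::'k) \<noteq> 0" "homog 3 g" "\<And>z. inV z \<Longrightarrow> trilin g z z z = 0"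
  shows "g = (\<lambda>M. 0)"
proof (rule ext)
  fix M :: "'i multiset"
  show "g M = 0"
  proof (cases "size M = 3")
    case False then show ?thesis using assms(3) unfolding homog_def by auto
  next
    case True
    then obtain i j k where M: "M = add_mset k (add_mset j {#i#})" by (rule size3_obtain)
    have s6: "(6::'k) \<noteq> 0" using six_nz assms(1,2) by blast
    have tz: "trilin g (ev i) (ev j) (ev k) = 0"
    proof -
      have ivs: "inV (ev i :: 'i \<Rightarrow> 'k)" "inV (ev j :: 'i \<Rightarrow> 'k)" "inV (ev k :: 'i \<Rightarrow> 'k)"
        by (rule inV_ev)+
      have "6 * trilin g (ev i) (ev j) (ev k) = 0"
        unfolding polarization[OF ivs]
        by (simp add: assms(4) ivs inV_add)
      then show ?thesis using s6 by simp
    qed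
    have "trilin g (ev i) (ev j) (ev k) = of_nat (count {#i#} j + 1) * of_nat (count (add_mset j {#i#}) k + 1) * g M / 6"
      unfolding trilin_def by (simp add: dderiv_ev M add_mset_commute mult_ac)
    moreover have "of_nat (count {#i#} j + 1) \<noteq> (0::'k)"
      using assms(1) by (cases "i = j") auto
    moreover have "of_nat (count (add_mset j {#i#}) k + 1) \<noteq> (0::'k)"
      using assms(1,2) by (cases "i = k"; cases "j = k") (auto simp: numeral_3_eq_3[symmetric])
    ultimately show ?thesis using tz s6 by auto
  qed
qed



definition linfun :: "(('i \<Rightarrow> 'k::comm_ring_1) \<Rightarrow> 'k) \<Rightarrow> bool" where
  "linfun \<phi> \<longleftrightarrow> (\<forall>x y. inV x \<longrightarrow> inV y \<longrightarrow> \<phi> (\<lambda>i. x i + y i) = \<phi> x + \<phi> y)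
     \<and> (\<forall>t x. inV x \<longrightarrow> \<phi> (\<lambda>i. t * x i) = t * \<phi> x)"

lemma linfunD: "linfun \<phi> \<Longrightarrow> inV x \<Longrightarrow> inV y \<Longrightarrow> \<phi> (\<lambda>i. x i + y i) = \<phi> x + \<phi> y"
  "linfun \<phi> \<Longrightarrow> inV x \<Longrightarrow> \<phi> (\<lambda>i. t * x i) = t * \<phi> x"
  unfolding linfun_def by auto

lemma linfun_zero: "linfun \<phi> \<Longrightarrow> \<phi> (\<lambda>i. 0) = 0"
  using linfunD(2)[of \<phi> "\<lambda>i. 0" 0] inV_zero by simp

lemma linfun_sum:
  assumes "linfun \<phi>" "finite A" "\<And>k. k \<in> A \<Longrightarrow> inV (z k)"
  shows "\<phi> (\<lambda>i. \<Sum>k\<in>A. c k * z k i) = (\<Sum>k\<in>A. c k * \<phi> (z k))"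
  using assms(2,3)
proof (induction A rule: finite_induct)
  case empty then show ?case using linfun_zero[OF assms(1)] by simp
next
  case (insert a A)
  have "\<phi> (\<lambda>i. c a * z a i + (\<Sum>k\<in>A. c k * z k i)) = \<phi> (\<lambda>i. c a * z a i) + \<phi> (\<lambda>i. \<Sum>k\<in>A. c k * z k i)"
    by (rule linfunD(1)[OF assms(1)]) (use insert in \<open>auto intro: inV_scale inV_sum\<close>)
  then show ?case using insert linfunD(2)[OF assms(1)] by simp
qed

definition ser1 :: "(('i \<Rightarrow> 'k::comm_ring_1) \<Rightarrow> 'k) \<Rightarrow> ('i,'k) series" where
  "ser1 \<phi> = (\<lambda>M. if size M = 1 then \<phi> (ev (SOME i. i \<in># M)) else 0)"

lemma homog_ser1: "homog 1 (ser1 \<phi>)" unfolding homog_def ser1_def by auto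

lemma inV_decomp:
  assumes "inV (x::'i \<Rightarrow> 'k::comm_ring_1)" shows "x = (\<lambda>j. \<Sum>i\<in>{i. x i \<noteq> 0}. x i * ev i j)"
proof (rule ext)
  fix j
  have "(\<Sum>i\<in>{i. x i \<noteq> 0}. x i * ev i j) = (\<Sum>i\<in>{i. x i \<noteq> 0}. if i = j then x i else 0)"
    by (rule sum.cong) (auto simp: ev_def)
  also have "\<dots> = (if j \<in> {i. x i \<noteq> 0} then x j else 0)"
    using assms unfolding inV_def by (rule sum.delta)
  finally show "x j = (\<Sum>i\<in>{i. x i \<noteq> 0}. x i * ev i j)" by auto
qed

lemma val_ser1:
  assumes "linfun \<phi>" "inV x"
  shows "dderiv x (ser1 \<phi>) {#} = \<phi> x"
proof -
  have "dderiv x (ser1 \<phi>) {#} = (\<Sum>i\<in>{i. x i \<noteq> 0}. x i * \<phi> (ev i))"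
    unfolding dderiv_def ser1_def by simp
  also have "\<dots> = \<phi> (\<lambda>j. \<Sum>i\<in>{i. x i \<noteq> 0}. x i * ev i j)"
    by (rule linfun_sum[symmetric]) (use assms inV_ev in \<open>auto simp: inV_def\<close>)
  also have "\<dots> = \<phi> x" using inV_decomp[OF assms(2)] by simp
  finally show ?thesis .
qed

lemma linfun_trilin: "linfun (\<lambda>x. trilin f x a b)"
  unfolding linfun_def by (simp add: trilin_add1 trilin_scale1)

lemma linfun_val: "linfun (\<lambda>x. dderiv x l {#})"
  unfolding linfun_def by (simp add: dderiv_add_dir dderiv_scale_dir)



lemma dderiv_scale_dir_fun: "inV x \<Longrightarrow> dderiv (\<lambda>i. t * x i) h = (\<lambda>M. t * dderiv x h M)"
  by (rule ext) (rule dderiv_scale_dir)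
lemma dderiv_cmult_fun: "dderiv v (\<lambda>M. t * a M) = (\<lambda>M. t * dderiv v a M)"
  by (rule ext) (rule dderiv_cmult)
lemma dderiv_diff_fun: "dderiv v (\<lambda>M. a M - b M) = (\<lambda>M. dderiv v a M - (dderiv v b M::'k::comm_ring_1))"
  by (rule ext) (rule dderiv_diff)

lemma trilin_scale2: "inV y \<Longrightarrow> trilin f x (\<lambda>i. t * y i) z = t * trilin f x y z"
  unfolding trilin_def by (simp add: dderiv_scale_dir_fun dderiv_cmult)
lemma trilin_scale3: "inV z \<Longrightarrow> trilin f x y (\<lambda>i. t * z i) = t * trilin f x y z"
  unfolding trilin_def by (simp add: dderiv_scale_dir_fun dderiv_cmult_fun dderiv_cmult)

lemma fs_zero: "finite_strength n (\<lambda>M. 0)"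
  unfolding finite_strength_def by (rule exI[of _ 0]) auto

lemma extraction:
  fixes \<Phi> :: "(('i \<Rightarrow> 'k::field) \<Rightarrow> 'k) list"
  assumes two: "(2::'k) \<noteq> 0" and three: "(3::'k) \<noteq> 0"
  shows "\<forall>g. homog 3 g \<longrightarrow> (\<forall>\<phi>\<in>set \<Phi>. linfun \<phi>) \<longrightarrow>
     (\<forall>z. inV z \<longrightarrow> (\<forall>\<phi>\<in>set \<Phi>. \<phi> z = 0) \<longrightarrow> trilin g z z z = 0) \<longrightarrow> finite_strength 3 g"
proof (induction \<Phi>)
  case Nil
  show ?case
  proof (intro allI impI)
    fix g :: "('i,'k) series"
    assume "homog 3 g" "\<forall>z. inV z \<longrightarrow> (\<forall>\<phi>\<in>set []. \<phi> z = 0) \<longrightarrow> trilin g z z z = 0"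
    then have "g = (\<lambda>M. 0)" using cubic_zero[OF two three] by auto
    then show "finite_strength 3 g" using fs_zero by simp
  qed
next
  case (Cons \<phi> \<Phi>)
  show ?case
  proof (intro allI impI)
    fix g :: "('i,'k) series"
    assume hg: "homog 3 g" and lf: "\<forall>\<phi>\<in>set (\<phi> # \<Phi>). linfun \<phi>"
      and van: "\<forall>z. inV z \<longrightarrow> (\<forall>\<phi>\<in>set (\<phi> # \<Phi>). \<phi> z = 0) \<longrightarrow> trilin g z z z = 0"
    have s6: "(6::'k) \<noteq> 0" using six_nz[OF two three] .
    have lfp: "linfun \<phi>" and lfs: "\<forall>\<psi>\<in>set \<Phi>. linfun \<psi>" using lf by auto
    show "finite_strength 3 g"
    proof (cases "\<forall>z. inV z \<longrightarrow> (\<forall>\<psi>\<in>set \<Phi>. \<psi> z = 0) \<longrightarrow> \<phi> z = 0")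
      case True
      then have "\<forall>z. inV z \<longrightarrow> (\<forall>\<psi>\<in>set \<Phi>. \<psi> z = 0) \<longrightarrow> trilin g z z z = 0"
        using van by auto
      then show ?thesis using Cons.IH hg lfs by blast
    next
      case False
      then obtain p0 where p0: "inV p0" "\<forall>\<psi>\<in>set \<Phi>. \<psi> p0 = 0" "\<phi> p0 \<noteq> 0" by blast
      define p where "p = (\<lambda>i. (1 / \<phi> p0) * p0 i)"
      have ip: "inV p" unfolding p_def using p0(1) by (rule inV_scale)
      have "\<phi> p = (1 / \<phi> p0) * \<phi> p0" unfolding p_def by (rule linfunD(2)[OF lfp p0(1)])
      then have php: "\<phi> p = 1" using p0(3) by simp
      have psp: "\<forall>\<psi>\<in>set \<Phi>. \<psi> p = 0"
      proof
        fix \<psi> assume "\<psi> \<in> set \<Phi>"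
        then have "\<psi> p = (1 / \<phi> p0) * \<psi> p0" unfolding p_def using lfs by (intro linfunD(2)[OF _ p0(1)]) auto
        then show "\<psi> p = 0" using p0(2) \<open>\<psi> \<in> set \<Phi>\<close> by simp
      qed
      define L1 where "L1 = dderiv p (dderiv p g)"
      define C where "C = trilin g p p p"
      define R where "R = (\<lambda>M. dderiv p g M - (1/2) * smult_series (ser1 \<phi>) L1 M
                          + C * smult_series (ser1 \<phi>) (ser1 \<phi>) M)"
      define g' where "g' = (\<lambda>M. g M - smult_series (ser1 \<phi>) R M)"
      have h2: "homog 2 (dderiv p g)" using hg homog_dderiv[of 2] by (simp add: numeral_3_eq_3 numeral_2_eq_2)
      have hL1: "homog 1 L1" unfolding L1_def using h2 homog_dderiv[of 1] by (simp add: numeral_2_eq_2)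
      have hs1: "homog 2 (smult_series (ser1 \<phi>) L1)"
        using homog_smult[OF homog_ser1 hL1] unfolding one_add_one .
      have hs2: "homog 2 (smult_series (ser1 \<phi>) (ser1 \<phi>))"
        using homog_smult[OF homog_ser1 homog_ser1] unfolding one_add_one .
      have hR: "homog 2 R" unfolding R_def
        using hs1 hs2 h2 by (intro homog_add homog_diff homog_cmult) auto
      have hg': "homog 3 g'" unfolding g'_def
        using homog_smult[OF homog_ser1 hR] hg by (intro homog_diff) (auto simp: numeral_3_eq_3 numeral_2_eq_2)
      have van': "trilin g' z z z = 0" if iz: "inV z" and zz: "\<forall>\<psi>\<in>set \<Phi>. \<psi> z = 0" for z
      proof -
        define t where "t = \<phi> z"
        define q where "q = (\<lambda>i. (- t) * p i)"
        have iq: "inV q" unfolding q_def using ip by (rule inV_scale)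
        define w where "w = (\<lambda>i. z i + q i)"
        have iw: "inV w" unfolding w_def using iz iq by (rule inV_add)
        have "\<phi> q = (- t) * \<phi> p" unfolding q_def by (rule linfunD(2)[OF lfp ip])
        moreover have "\<phi> w = \<phi> z + \<phi> q" unfolding w_def by (rule linfunD(1)[OF lfp iz iq])
        ultimately have "\<phi> w = 0" using php t_def by simp
        moreover have "\<forall>\<psi>\<in>set \<Phi>. \<psi> w = 0"
        proof
          fix \<psi> assume h: "\<psi> \<in> set \<Phi>"
          then have l: "linfun \<psi>" using lfs by auto
          have "\<psi> q = (- t) * \<psi> p" unfolding q_def by (rule linfunD(2)[OF l ip])
          moreover have "\<psi> w = \<psi> z + \<psi> q" unfolding w_def by (rule linfunD(1)[OF l iz iq])
          moreover have "\<psi> p = 0" "\<psi> z = 0" using psp zz h by auto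
          ultimately show "\<psi> w = 0" by simp
        qed
        ultimately have tw: "trilin g w w w = 0" using van iw by auto
        have "trilin g w w w = trilin g z z z - 3 * t * trilin g z z p + 3 * t^2 * trilin g z p p - t^3 * C"
        proof -
          have e: "trilin g w w w = trilin g z z z + 3 * trilin g z z q + 3 * trilin g z q q + trilin g q q q"
            unfolding w_def by (rule cube_add[OF iz iq])
          have e1: "trilin g z z q = (-t) * trilin g z z p" unfolding q_def by (rule trilin_scale3[OF ip])
          have e2: "trilin g z q q = (-t) * ((-t) * trilin g z p p)" unfolding q_def
            by (simp only: trilin_scale3[OF ip] trilin_scale2[OF ip])
          have e3: "trilin g q q q = (-t) * ((-t) * ((-t) * C))" unfolding q_def C_def
            by (simp only: trilin_scale3[OF ip] trilin_scale2[OF ip] trilin_scale1[OF ip])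
          show ?thesis unfolding e e1 e2 e3 by (simp add: power2_eq_square power3_eq_cube algebra_simps)
        qed
        moreover have "trilin g' z z z = trilin g z z z - 3 * t * trilin g z z p + 3 * t^2 * trilin g z p p - t^3 * C"
        proof -
          have d3: "dderiv z (dderiv z (dderiv z (smult_series (ser1 \<phi>) R))) {#}
              = 3 * t * dderiv z (dderiv z R) {#}"
            using d3_prod12[OF homog_ser1 hR] val_ser1[OF lfp iz] t_def by simp
          have d2R: "dderiv z (dderiv z R) {#} = 6 * trilin g z z p - 6 * t * trilin g z p p + 2 * C * t^2"
          proof -
            have a1: "dderiv z (dderiv z (dderiv p g)) {#} = 6 * trilin g z z p"
              unfolding trilin_def using s6 by simp
            have a2: "dderiv z (dderiv z (smult_series (ser1 \<phi>) L1)) {#} = 12 * t * trilin g z p p"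
            proof -
              have "dderiv z (dderiv z (smult_series (ser1 \<phi>) L1)) {#} = dderiv z (ser1 \<phi>) {#} * dderiv z L1 {#} + dderiv z (ser1 \<phi>) {#} * dderiv z L1 {#}"
                by (rule d2_prod11[OF homog_ser1 hL1])
              moreover have "dderiv z L1 {#} = 6 * trilin g z p p" unfolding L1_def trilin_def using s6 by simp
              ultimately show ?thesis using val_ser1[OF lfp iz] t_def by simp
            qed
            have a3: "dderiv z (dderiv z (smult_series (ser1 \<phi>) (ser1 \<phi>))) {#} = 2 * t^2"
              using d2_prod11[OF homog_ser1 homog_ser1, of z z \<phi> \<phi>] val_ser1[OF lfp iz] t_def
              by (simp add: power2_eq_square)
            show ?thesis unfolding R_def dderiv_add_fun dderiv_diff_fun dderiv_cmult_fun
              using two by (simp add: a1 a2 a3 algebra_simps)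
          qed
          have e: "trilin g' z z z = trilin g z z z - dderiv z (dderiv z (dderiv z (smult_series (ser1 \<phi>) R))) {#} / 6"
            unfolding g'_def trilin_def dderiv_diff_fun by (simp add: diff_divide_distrib)
          have ar: "3 * t * (6 * A - 6 * t * B + 2 * C * t^2) / 6 = 3 * t * A - 3 * t^2 * B + t^3 * C" for A B :: 'k
            using s6 by (simp add: field_simps power2_eq_square power3_eq_cube)
          show ?thesis unfolding e d3 d2R ar by (simp add: algebra_simps)
        qed
        ultimately show ?thesis using tw by simp
      qed
      have ih: "homog 3 g' \<longrightarrow> (\<forall>\<phi>\<in>set \<Phi>. linfun \<phi>) \<longrightarrow> (\<forall>z. inV z \<longrightarrow> (\<forall>\<phi>\<in>set \<Phi>. \<phi> z = 0) \<longrightarrow> trilin g' z z z = 0) \<longrightarrow> finite_strength 3 g'"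
        using Cons.IH by (rule spec)
      have vv: "\<forall>z. inV z \<longrightarrow> (\<forall>\<phi>\<in>set \<Phi>. \<phi> z = 0) \<longrightarrow> trilin g' z z z = 0" using van' by blast
      have "finite_strength 3 g'" using ih hg' lfs vv by simp
      then obtain s :: nat and a b :: "nat \<Rightarrow> ('i,'k) series" where
          abg: "(\<forall>i<s. \<exists>d e. 0 < d \<and> d < 3 \<and> 0 < e \<and> e < 3 \<and> homog d (a i) \<and> homog e (b i))
           \<and> g' = (\<lambda>M. \<Sum>i<s. smult_series (a i) (b i) M)"
        unfolding finite_strength_def by (elim exE) (rule that)
      have ab: "\<forall>i<s. \<exists>d e. 0 < d \<and> d < 3 \<and> 0 < e \<and> e < 3 \<and> homog d (a i) \<and> homog e (b i)"
        and g'e: "g' = (\<lambda>M. \<Sum>i<s. smult_series (a i) (b i) M)" using abg by auto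
      show ?thesis unfolding finite_strength_def
      proof (intro exI conjI)
        show "\<forall>i<Suc s. \<exists>d e. 0 < d \<and> d < 3 \<and> 0 < e \<and> e < 3 \<and> homog d ((a(s := ser1 \<phi>)) i) \<and> homog e ((b(s := R)) i)"
        proof (intro allI impI)
          fix i assume "i < Suc s"
          then show "\<exists>d e. 0 < d \<and> d < 3 \<and> 0 < e \<and> e < 3 \<and> homog d ((a(s := ser1 \<phi>)) i) \<and> homog e ((b(s := R)) i)"
          proof (cases "i = s")
            case True then show ?thesis using homog_ser1 hR by (intro exI[of _ 1] exI[of _ 2]) auto
          next
            case False then show ?thesis using ab \<open>i < Suc s\<close> by auto
          qed
        qed
        show "g = (\<lambda>M. \<Sum>i<Suc s. smult_series ((a(s := ser1 \<phi>)) i) ((b(s := R)) i) M)"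
        proof (rule ext)
          fix M
          have "(\<Sum>i<Suc s. smult_series ((a(s := ser1 \<phi>)) i) ((b(s := R)) i) M)
             = (\<Sum>i<s. smult_series (a i) (b i) M) + smult_series (ser1 \<phi>) R M"
            by simp
          also have "\<dots> = g M" using fun_cong[OF g'e, of M] unfolding g'_def by (metis diff_add_cancel)
          finally show "g M = (\<Sum>i<Suc s. smult_series ((a(s := ser1 \<phi>)) i) ((b(s := R)) i) M)" by simp
        qed
      qed
    qed
  qed
qed



lemma sum_split_add: "(\<Sum>i<s1+(s2::nat). f i) = (\<Sum>i<s1. f i) + (\<Sum>i<s2. f (s1 + i))"
  by (induction s2) (auto simp: add_ac)

lemma fs_add:
  fixes a b :: "('i,'k::comm_ring_1) series"
  assumes "finite_strength n a" "finite_strength n b"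
  shows "finite_strength n (\<lambda>M. a M + b M)"
proof -
  obtain s1 :: nat and a1 b1 :: "nat \<Rightarrow> ('i,'k) series" where
    h1: "(\<forall>i<s1. \<exists>d e. 0 < d \<and> d < n \<and> 0 < e \<and> e < n \<and> homog d (a1 i) \<and> homog e (b1 i))
         \<and> a = (\<lambda>M. \<Sum>i<s1. smult_series (a1 i) (b1 i) M)"
    using assms(1) unfolding finite_strength_def by (elim exE) (rule that)
  obtain s2 :: nat and a2 b2 :: "nat \<Rightarrow> ('i,'k) series" where
    h2: "(\<forall>i<s2. \<exists>d e. 0 < d \<and> d < n \<and> 0 < e \<and> e < n \<and> homog d (a2 i) \<and> homog e (b2 i))
         \<and> b = (\<lambda>M. \<Sum>i<s2. smult_series (a2 i) (b2 i) M)"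
    using assms(2) unfolding finite_strength_def by (elim exE) (rule that)
  define A where "A = (\<lambda>i. if i < s1 then a1 i else a2 (i - s1))"
  define B where "B = (\<lambda>i. if i < s1 then b1 i else b2 (i - s1))"
  show ?thesis unfolding finite_strength_def
  proof (intro exI conjI)
    show "\<forall>i<s1+s2. \<exists>d e. 0 < d \<and> d < n \<and> 0 < e \<and> e < n \<and> homog d (A i) \<and> homog e (B i)"
    proof (intro allI impI)
      fix i assume "i < s1 + s2"
      then show "\<exists>d e. 0 < d \<and> d < n \<and> 0 < e \<and> e < n \<and> homog d (A i) \<and> homog e (B i)"
        using h1 h2 unfolding A_def B_def by (cases "i < s1") auto
    qed
    show "(\<lambda>M. a M + b M) = (\<lambda>M. \<Sum>i<s1+s2. smult_series (A i) (B i) M)"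
      using h1 h2 unfolding A_def B_def by (simp add: sum_split_add)
  qed
qed

lemma smult_cmult1: "smult_series (\<lambda>M. t * a M) b M = t * smult_series a b (M::'i multiset) " for t :: "'k::comm_ring_1"
  unfolding smult_series_def by (simp add: sum_distrib_left mult_ac)

lemma fs_cmult:
  fixes a :: "('i,'k::comm_ring_1) series"
  assumes "finite_strength n a"
  shows "finite_strength n (\<lambda>M. t * a M)"
proof -
  obtain s1 :: nat and a1 b1 :: "nat \<Rightarrow> ('i,'k) series" where
    h1: "(\<forall>i<s1. \<exists>d e. 0 < d \<and> d < n \<and> 0 < e \<and> e < n \<and> homog d (a1 i) \<and> homog e (b1 i))
         \<and> a = (\<lambda>M. \<Sum>i<s1. smult_series (a1 i) (b1 i) M)"
    using assms(1) unfolding finite_strength_def by (elim exE) (rule that)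
  show ?thesis unfolding finite_strength_def
  proof (intro exI conjI)
    show "\<forall>i<s1. \<exists>d e. 0 < d \<and> d < n \<and> 0 < e \<and> e < n \<and> homog d ((\<lambda>i M. t * a1 i M) i) \<and> homog e (b1 i)"
    proof (intro allI impI)
      fix i assume "i < s1"
      then obtain d e where "0 < d \<and> d < n \<and> 0 < e \<and> e < n \<and> homog d (a1 i) \<and> homog e (b1 i)"
        using h1 by blast
      then show "\<exists>d e. 0 < d \<and> d < n \<and> 0 < e \<and> e < n \<and> homog d ((\<lambda>i M. t * a1 i M) i) \<and> homog e (b1 i)"
        using homog_cmult[of d "a1 i" t] by auto
    qed
    show "(\<lambda>M. t * a M) = (\<lambda>M. \<Sum>i<s1. smult_series ((\<lambda>i M. t * a1 i M) i) (b1 i) M)"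
      using h1 by (simp add: smult_cmult1 sum_distrib_left)
  qed
qed

lemma fs_diff:
  fixes a b :: "('i,'k::comm_ring_1) series"
  assumes "finite_strength n a" "finite_strength n b"
  shows "finite_strength n (\<lambda>M. a M - b M)"
  using fs_add[OF assms(1) fs_cmult[OF assms(2), of "-1"]] by simp

lemma fs_cong: "finite_strength n a \<Longrightarrow> (\<And>M. a M = b M) \<Longrightarrow> finite_strength n b"
proof -
  assume "finite_strength n a" "\<And>M. a M = b M"
  moreover have "a = b" using \<open>\<And>M. a M = b M\<close> by auto
  ultimately show ?thesis by simp
qed



definition cfun :: "('i,'k::field) series \<Rightarrow> (nat \<Rightarrow> 'i \<Rightarrow> 'k) \<Rightarrow> nat \<Rightarrow> ('i \<Rightarrow> 'k) \<Rightarrow> nat \<Rightarrow> 'k" where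
  "cfun f v r x = (SOME c. finite_strength 2 (\<lambda>M. dderiv x f M - (\<Sum>j<r. c j * dderiv (v j) f M)))"

lemma c_unique:
  fixes f :: "('i,'k::field) series"
  assumes h7: "\<forall>c. finite_strength 2 (\<lambda>M. \<Sum>j<r. c j * dderiv (v j) f M) \<longrightarrow> (\<forall>j<r. c j = 0)"
    and a: "finite_strength 2 (\<lambda>M. D M - (\<Sum>j<r. c j * dderiv (v j) f M))"
    and b: "finite_strength 2 (\<lambda>M. D M - (\<Sum>j<r. c' j * dderiv (v j) f M))"
  shows "\<forall>j<r. c j = c' j"
proof -
  have "finite_strength 2 (\<lambda>M. \<Sum>j<r. (c j - c' j) * dderiv (v j) f M)"
    using fs_diff[OF b a] by (rule fs_cong) (simp add: left_diff_distrib sum_subtractf)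
  then show ?thesis using h7 by auto
qed

lemma cfun_spec:
  fixes f :: "('i,'k::field) series"
  assumes h8: "\<forall>x. inV x \<longrightarrow> (\<exists>c. finite_strength 2 (\<lambda>M. dderiv x f M - (\<Sum>j<r. c j * dderiv (v j) f M)))"
    and "inV x"
  shows "finite_strength 2 (\<lambda>M. dderiv x f M - (\<Sum>j<r. cfun f v r x j * dderiv (v j) f M))"
proof -
  obtain c where "finite_strength 2 (\<lambda>M. dderiv x f M - (\<Sum>j<r. c j * dderiv (v j) f M))"
    using h8 assms(2) by blast
  then show ?thesis unfolding cfun_def
    by (rule someI[where P="\<lambda>c. finite_strength 2 (\<lambda>M. dderiv x f M - (\<Sum>j<r. c j * dderiv (v j) f M))"])
qed

lemma cfun_linfun:
  fixes f :: "('i,'k::field) series"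
  assumes h7: "\<forall>c. finite_strength 2 (\<lambda>M. \<Sum>j<r. c j * dderiv (v j) f M) \<longrightarrow> (\<forall>j<r. c j = 0)"
    and h8: "\<forall>x. inV x \<longrightarrow> (\<exists>c. finite_strength 2 (\<lambda>M. dderiv x f M - (\<Sum>j<r. c j * dderiv (v j) f M)))"
    and jr: "j < r"
  shows "linfun (\<lambda>x. cfun f v r x j)"
  unfolding linfun_def
proof (intro conjI allI impI)
  fix x y :: "'i \<Rightarrow> 'k" assume x: "inV x" and y: "inV y"
  have hx: "finite_strength 2 (\<lambda>M. dderiv (\<lambda>i. x i + y i) f M - (\<Sum>j<r. (cfun f v r x j + cfun f v r y j) * dderiv (v j) f M))"
    using fs_add[OF cfun_spec[OF h8 x] cfun_spec[OF h8 y]]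
    by (rule fs_cong) (simp add: dderiv_add_dir[OF x y] distrib_right sum.distrib)
  show "cfun f v r (\<lambda>i. x i + y i) j = cfun f v r x j + cfun f v r y j"
    using c_unique[OF h7 cfun_spec[OF h8 inV_add[OF x y]] hx] jr by blast
next
  fix t and x :: "'i \<Rightarrow> 'k" assume x: "inV x"
  have hx: "finite_strength 2 (\<lambda>M. dderiv (\<lambda>i. t * x i) f M - (\<Sum>j<r. (t * cfun f v r x j) * dderiv (v j) f M))"
    using fs_cmult[OF cfun_spec[OF h8 x], of t]
    by (rule fs_cong) (simp add: dderiv_scale_dir[OF x] right_diff_distrib sum_distrib_left mult_ac)
  show "cfun f v r (\<lambda>i. t * x i) j = t * cfun f v r x j"
    using c_unique[OF h7 cfun_spec[OF h8 inV_scale[OF x]] hx] jr by blast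
qed

lemma cfun_K:
  fixes f :: "('i,'k::field) series"
  assumes h8: "\<forall>x. inV x \<longrightarrow> (\<exists>c. finite_strength 2 (\<lambda>M. dderiv x f M - (\<Sum>j<r. c j * dderiv (v j) f M)))"
    and z: "inV z" and c0: "\<forall>j<r. cfun f v r z j = 0"
  shows "finite_strength 2 (dderiv z f)"
  using cfun_spec[OF h8 z] by (rule fs_cong) (simp add: c0)

definition PsiP :: "('i,'k::field) series \<Rightarrow> ('i \<Rightarrow> 'k) \<Rightarrow> (('i \<Rightarrow> 'k) \<Rightarrow> 'k) list \<Rightarrow> bool" where
  "PsiP f a \<Psi> \<longleftrightarrow> (\<forall>\<psi>\<in>set \<Psi>. linfun \<psi>) \<and>
     (\<forall>x. inV x \<longrightarrow> (\<forall>\<psi>\<in>set \<Psi>. \<psi> x = 0) \<longrightarrow> (\<forall>y. inV y \<longrightarrow> trilin f a x y = 0))"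

definition Psi where "Psi f a = (SOME \<Psi>. PsiP f a \<Psi>)"

lemma dderiv_sum_fun: "dderiv v (\<lambda>M. \<Sum>k\<in>A. F k M) = (\<lambda>M. \<Sum>k\<in>A. dderiv v (F k) M)"
  by (rule ext) (rule dderiv_sum)

lemma Psi_ex:
  fixes f :: "('i,'k::field) series"
  assumes a: "inV a" and fs: "finite_strength 2 (dderiv a f)"
  shows "\<exists>\<Psi>. PsiP f a \<Psi>"
proof -
  obtain s :: nat and l m :: "nat \<Rightarrow> ('i,'k) series" where
    h1: "(\<forall>i<s. \<exists>d e. 0 < d \<and> d < 2 \<and> 0 < e \<and> e < 2 \<and> homog d (l i) \<and> homog e (m i))
         \<and> dderiv a f = (\<lambda>M. \<Sum>i<s. smult_series (l i) (m i) M)"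
    using fs unfolding finite_strength_def by (elim exE) (rule that)
  have hl: "homog 1 (l i)" and hm: "homog 1 (m i)" if "i < s" for i
    using h1 that by (metis One_nat_def less_2_cases_iff not_less_zero)+
  define \<Psi> where "\<Psi> = map (\<lambda>i x. dderiv x (l i) {#}) [0..<s] @ map (\<lambda>i x. dderiv x (m i) {#}) [0..<s]"
  have "PsiP f a \<Psi>" unfolding PsiP_def
  proof (intro conjI allI impI)
    show "\<forall>\<psi>\<in>set \<Psi>. linfun \<psi>" unfolding \<Psi>_def using linfun_val by auto
  next
    fix x y :: "'i \<Rightarrow> 'k" assume x: "inV x" and z: "\<forall>\<psi>\<in>set \<Psi>. \<psi> x = 0" and y: "inV y"
    have lx: "dderiv x (l i) {#} = 0" and mx: "dderiv x (m i) {#} = 0" if "i < s" for i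
      using z that unfolding \<Psi>_def by auto
    have "trilin f a x y = dderiv x (dderiv y (dderiv a f)) {#} / 6"
      unfolding trilin_def by (simp add: dderiv_comm[OF a x] dderiv_comm_fun[OF a y])
    also have "\<dots> = (\<Sum>i<s. dderiv x (dderiv y (smult_series (l i) (m i))) {#}) / 6"
      using h1 by (simp add: dderiv_sum_fun)
    also have "\<dots> = 0"
      by (simp add: d2_prod11[OF hl hm] lx mx)
    finally show "trilin f a x y = 0" .
  qed
  then show ?thesis by blast
qed

lemma Psi_spec:
  fixes f :: "('i,'k::field) series"
  assumes "inV a" "finite_strength 2 (dderiv a f)"
  shows "PsiP f a (Psi f a)"
  unfolding Psi_def using Psi_ex[OF assms] by (rule someI_ex)



lemma lin_dep:
  fixes G :: "nat \<Rightarrow> nat \<Rightarrow> 'k::field"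
  shows "finite S \<Longrightarrow> card S > m \<Longrightarrow> \<exists>s. (\<exists>k\<in>S. s k \<noteq> 0) \<and> (\<forall>j<m. (\<Sum>k\<in>S. s k * G k j) = 0)"
proof (induction m arbitrary: S G)
  case 0
  then obtain k0 where "k0 \<in> S" by (metis card.empty ex_in_conv less_irrefl)
  then show ?case by (intro exI[of _ "\<lambda>k. if k = k0 then 1 else 0"]) auto
next
  case (Suc m)
  show ?case
  proof (cases "\<forall>k\<in>S. G k m = 0")
    case True
    have cm: "card S > m" using Suc.prems(2) by simp
    obtain s where s: "\<exists>k\<in>S. s k \<noteq> 0" "\<forall>j<m. (\<Sum>k\<in>S. s k * G k j) = 0"
      using Suc.IH[OF Suc.prems(1) cm] by blast
    have "\<forall>j<Suc m. (\<Sum>k\<in>S. s k * G k j) = 0"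
      using s(2) True by (auto simp: less_Suc_eq)
    then show ?thesis using s(1) by blast
  next
    case False
    then obtain k0 where k0: "k0 \<in> S" "G k0 m \<noteq> 0" by blast
    define S' where "S' = S - {k0}"
    have fS': "finite S'" using Suc.prems(1) S'_def by simp
    have cS': "card S' > m" using Suc.prems k0(1) S'_def by (simp add: card_Diff_singleton)
    define G' where "G' = (\<lambda>k j. G k j - (G k m / G k0 m) * G k0 j)"
    obtain s' where s': "\<exists>k\<in>S'. s' k \<noteq> 0" "\<forall>j<m. (\<Sum>k\<in>S'. s' k * G' k j) = 0"
      using Suc.IH[OF fS' cS'] by blast
    define a where "a = (\<Sum>k\<in>S'. s' k * G k m)"
    define s where "s = (\<lambda>k. if k = k0 then - a / G k0 m else s' k)"
    have sumS: "(\<Sum>k\<in>S. s k * G k j) = s k0 * G k0 j + (\<Sum>k\<in>S'. s' k * G k j)" for j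
    proof -
      have "(\<Sum>k\<in>S. s k * G k j) = s k0 * G k0 j + (\<Sum>k\<in>S'. s k * G k j)"
        unfolding S'_def using Suc.prems(1) k0(1) by (rule sum.remove)
      moreover have "(\<Sum>k\<in>S'. s k * G k j) = (\<Sum>k\<in>S'. s' k * G k j)"
        by (rule sum.cong) (auto simp: s_def S'_def)
      ultimately show ?thesis by simp
    qed
    have "(\<Sum>k\<in>S. s k * G k j) = 0" if "j < Suc m" for j
    proof (cases "j = m")
      case True
      have "s k0 * G k0 m = - a" using k0(2) by (simp add: s_def)
      then show ?thesis using sumS[of j] True by (simp add: a_def)
    next
      case False
      then have jm: "j < m" using that by simp
      have pw: "s' k * G' k j = s' k * G k j - (s' k * G k m) * (G k0 j / G k0 m)" for k
        by (simp add: G'_def algebra_simps)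
      have "(\<Sum>k\<in>S'. s' k * G' k j) = (\<Sum>k\<in>S'. s' k * G k j) - (\<Sum>k\<in>S'. (s' k * G k m) * (G k0 j / G k0 m))"
        by (simp only: pw sum_subtractf)
      also have "\<dots> = (\<Sum>k\<in>S'. s' k * G k j) - a * (G k0 j / G k0 m)"
        unfolding a_def by (simp only: sum_distrib_right)
      finally have "(\<Sum>k\<in>S'. s' k * G k j) = (\<Sum>k\<in>S'. s' k * G' k j) + a / G k0 m * G k0 j"
        by simp
      moreover have "s k0 * G k0 j = - a / G k0 m * G k0 j" by (simp add: s_def)
      ultimately show ?thesis using sumS[of j] s'(2) jm by simp
    qed
    moreover have "\<exists>k\<in>S. s k \<noteq> 0" using s'(1) unfolding s_def S'_def by auto
    ultimately show ?thesis by blast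
  qed
qed

lemma sqrt_ex:
  assumes "alg_closed_field TYPE('k::field)"
  shows "\<exists>b::'k. b * b = a"
proof -
  have "degree [:-a, 0, 1:] > 0" by simp
  then obtain x where "poly [:-a, 0, 1:] x = 0" using assms unfolding alg_closed_field_def by blast
  then show ?thesis by (intro exI[of _ x]) (simp add: algebra_simps)
qed

lemma cbrt_ex:
  assumes "alg_closed_field TYPE('k::field)"
  shows "\<exists>b::'k. b * b * b = a"
proof -
  have "degree [:-a, 0, 0, 1:] > 0" by simp
  then obtain x where "poly [:-a, 0, 0, 1:] x = 0" using assms unfolding alg_closed_field_def by blast
  then show ?thesis by (intro exI[of _ x]) (simp add: algebra_simps)
qed



lemma family:
  fixes f :: "('i,'k::field) series" and \<Phi>0 :: "(('i \<Rightarrow> 'k) \<Rightarrow> 'k) list"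
    and N :: nat
  assumes two: "(2::'k) \<noteq> 0" and three: "(3::'k) \<noteq> 0"
    and nfs: "\<not> finite_strength 3 f" and hf: "homog 3 f"
    and lf0: "\<forall>\<phi>\<in>set \<Phi>0. linfun \<phi>"
    and K: "\<forall>z. inV z \<longrightarrow> (\<forall>\<phi>\<in>set \<Phi>0. \<phi> z = 0) \<longrightarrow> finite_strength 2 (dderiv z f)"
  shows "\<exists>Z. \<forall>k<N. inV (Z k) \<and> (\<forall>\<phi>\<in>set \<Phi>0. \<phi> (Z k) = 0) \<and> trilin f (Z k) (Z k) (Z k) \<noteq> 0
            \<and> (\<forall>l<k. \<forall>y. inV y \<longrightarrow> trilin f (Z l) (Z k) y = 0)"
proof (induction N)
  case 0 show ?case by simp
next
  case (Suc N)
  then obtain Z where Z: "\<forall>k<N. inV (Z k) \<and> (\<forall>\<phi>\<in>set \<Phi>0. \<phi> (Z k) = 0) \<and> trilin f (Z k) (Z k) (Z k) \<noteq> 0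
            \<and> (\<forall>l<k. \<forall>y. inV y \<longrightarrow> trilin f (Z l) (Z k) y = 0)" by blast
  have PP: "PsiP f (Z l) (Psi f (Z l))" if "l < N" for l
    using Z that K by (intro Psi_spec) auto
  define \<Phi> where "\<Phi> = \<Phi>0 @ concat (map (\<lambda>l. Psi f (Z l)) [0..<N])"
  have lf: "\<forall>\<phi>\<in>set \<Phi>. linfun \<phi>" using lf0 PP unfolding \<Phi>_def PsiP_def by auto
  have "\<exists>z. inV z \<and> (\<forall>\<phi>\<in>set \<Phi>. \<phi> z = 0) \<and> trilin f z z z \<noteq> 0"
  proof (rule ccontr)
    assume "\<not> ?thesis"
    then have "\<forall>z. inV z \<longrightarrow> (\<forall>\<phi>\<in>set \<Phi>. \<phi> z = 0) \<longrightarrow> trilin f z z z = 0" by blast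
    then have "finite_strength 3 f" using extraction[OF two three, of \<Phi>] hf lf by blast
    then show False using nfs by simp
  qed
  then obtain z where z: "inV z" "\<forall>\<phi>\<in>set \<Phi>. \<phi> z = 0" "trilin f z z z \<noteq> 0" by blast
  have orth: "\<forall>y. inV y \<longrightarrow> trilin f (Z l) z y = 0" if "l < N" for l
  proof -
    have "\<forall>\<psi>\<in>set (Psi f (Z l)). \<psi> z = 0" using z(2) that unfolding \<Phi>_def by auto
    then show ?thesis using PP[OF that] z(1) unfolding PsiP_def by blast
  qed
  show ?case
  proof (intro exI[of _ "Z(N := z)"] allI impI)
    fix k assume "k < Suc N"
    show "inV ((Z(N := z)) k) \<and> (\<forall>\<phi>\<in>set \<Phi>0. \<phi> ((Z(N := z)) k) = 0) \<and> trilin f ((Z(N := z)) k) ((Z(N := z)) k) ((Z(N := z)) k) \<noteq> 0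
            \<and> (\<forall>l<k. \<forall>y. inV y \<longrightarrow> trilin f ((Z(N := z)) l) ((Z(N := z)) k) y = 0)"
    proof (cases "k = N")
      case True
      then show ?thesis using z orth unfolding \<Phi>_def by auto
    next
      case False
      then have "k < N" using \<open>k < Suc N\<close> by simp
      then show ?thesis using Z by auto
    qed
  qed
qed



lemma orth_row:
  fixes f :: "('i,'k::field) series"
  assumes fS: "finite S" and iZ: "\<forall>k\<in>S. inV (Z k)"
    and orth: "\<forall>k\<in>S. \<forall>l\<in>S. l \<noteq> k \<longrightarrow> (\<forall>y. inV y \<longrightarrow> trilin f (Z l) (Z k) y = 0)"
    and k: "k \<in> S" and y: "inV y"
  shows "trilin f (\<lambda>i. \<Sum>l\<in>S. t l * Z l i) (Z k) y = t k * trilin f (Z k) (Z k) y"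
proof -
  have "trilin f (\<lambda>i. \<Sum>l\<in>S. t l * Z l i) (Z k) y = (\<Sum>l\<in>S. t l * trilin f (Z l) (Z k) y)"
    using fS iZ by (intro trilin_sum1) auto
  also have "\<dots> = t k * trilin f (Z k) (Z k) y + (\<Sum>l\<in>S - {k}. t l * trilin f (Z l) (Z k) y)"
    using fS k by (rule sum.remove)
  also have "(\<Sum>l\<in>S - {k}. t l * trilin f (Z l) (Z k) y) = 0"
    using orth k y by (intro sum.neutral) auto
  finally show ?thesis by simp
qed

lemma orth_quad:
  fixes f :: "('i,'k::field) series"
  assumes fS: "finite S" and iZ: "\<forall>k\<in>S. inV (Z k)"
    and orth: "\<forall>k\<in>S. \<forall>l\<in>S. l \<noteq> k \<longrightarrow> (\<forall>y. inV y \<longrightarrow> trilin f (Z l) (Z k) y = 0)"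
    and y: "inV y"
  shows "trilin f (\<lambda>i. \<Sum>l\<in>S. t l * Z l i) (\<lambda>i. \<Sum>l\<in>S. t l * Z l i) y = (\<Sum>k\<in>S. t k * t k * trilin f (Z k) (Z k) y)"
proof -
  let ?x = "\<lambda>i. \<Sum>l\<in>S. t l * Z l i"
  have ix: "inV ?x" using fS iZ by (intro inV_sum) auto
  have "trilin f ?x ?x y = (\<Sum>k\<in>S. t k * trilin f (Z k) ?x y)"
    using fS iZ by (intro trilin_sum1) auto
  also have "\<dots> = (\<Sum>k\<in>S. t k * (t k * trilin f (Z k) (Z k) y))"
  proof (rule sum.cong[OF refl])
    fix k assume k: "k \<in> S"
    have "trilin f (Z k) ?x y = trilin f ?x (Z k) y" using iZ k ix by (intro trilin_swap12) auto
    also have "\<dots> = t k * trilin f (Z k) (Z k) y" by (rule orth_row[OF fS iZ orth k y])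
    finally show "t k * trilin f (Z k) ?x y = t k * (t k * trilin f (Z k) (Z k) y)" by simp
  qed
  finally show ?thesis by (simp add: mult.assoc)
qed

lemma orth_cube:
  fixes f :: "('i,'k::field) series"
  assumes fS: "finite S" and iZ: "\<forall>k\<in>S. inV (Z k)"
    and orth: "\<forall>k\<in>S. \<forall>l\<in>S. l \<noteq> k \<longrightarrow> (\<forall>y. inV y \<longrightarrow> trilin f (Z l) (Z k) y = 0)"
  shows "trilin f (\<lambda>i. \<Sum>l\<in>S. t l * Z l i) (\<lambda>i. \<Sum>l\<in>S. t l * Z l i) (\<lambda>i. \<Sum>l\<in>S. t l * Z l i)
     = (\<Sum>k\<in>S. t k * t k * t k * trilin f (Z k) (Z k) (Z k))"
proof -
  let ?x = "\<lambda>i. \<Sum>l\<in>S. t l * Z l i"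
  have ix: "inV ?x" using fS iZ by (intro inV_sum) auto
  have "trilin f ?x ?x ?x = (\<Sum>k\<in>S. t k * t k * trilin f (Z k) (Z k) ?x)"
    by (rule orth_quad[OF fS iZ orth ix])
  also have "\<dots> = (\<Sum>k\<in>S. t k * t k * (t k * trilin f (Z k) (Z k) (Z k)))"
  proof (rule sum.cong[OF refl])
    fix k assume k: "k \<in> S"
    have "trilin f (Z k) (Z k) ?x = trilin f (Z k) ?x (Z k)" using iZ k ix by (intro trilin_swap23) auto
    also have "\<dots> = trilin f ?x (Z k) (Z k)" using iZ k ix by (intro trilin_swap12) auto
    also have "\<dots> = t k * trilin f (Z k) (Z k) (Z k)" using iZ k by (intro orth_row[OF fS iZ orth k]) auto
    finally show "t k * t k * trilin f (Z k) (Z k) ?x = t k * t k * (t k * trilin f (Z k) (Z k) (Z k))" by simp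
  qed
  finally show ?thesis by (simp add: mult.assoc)
qed



lemma set_table:
  "set (table_entries v r n w u m) = v ` {..<r} \<union> {w i j | i j. i < r \<and> j < n i} \<union> u ` {..<m}"
  unfolding table_entries_def by auto

lemma table_snoc:
  "table_entries v r n w (u(m := x)) (Suc m) = table_entries v r n w u m @ [x]"
proof -
  have "map (u(m := x)) [0..<m] = map u [0..<m]" by (rule map_cong) auto
  then show ?thesis unfolding table_entries_def by simp
qed

lemma indep_ext:
  fixes f :: "('i,'k::field) series"
  assumes ind: "lin_indep_list es" and ies: "\<forall>e\<in>set es. inV e" and ix: "inV x"
    and c1: "trilin f x x x \<noteq> 0" and orth: "\<forall>e\<in>set es. trilin f x x e = 0"
  shows "lin_indep_list (es @ [x])"
  unfolding lin_indep_list_def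
proof (rule allI, rule impI)
  fix c :: "nat \<Rightarrow> 'k"
  assume H: "\<forall>i. (\<Sum>k<length (es @ [x]). c k * ((es @ [x]) ! k) i) = 0"
  let ?L = "length es"
  have H2: "(\<Sum>k<?L. c k * (es ! k) i) + c ?L * x i = 0" for i
  proof -
    have "(\<Sum>k<Suc ?L. c k * ((es @ [x]) ! k) i) = 0" using H by simp
    moreover have "(\<Sum>k<?L. c k * ((es @ [x]) ! k) i) = (\<Sum>k<?L. c k * (es ! k) i)"
      by (rule sum.cong) (auto simp: nth_append)
    ultimately show ?thesis by simp
  qed
  have cL: "c ?L = 0"
  proof (rule ccontr)
    assume nz: "c ?L \<noteq> 0"
    have xe: "x = (\<lambda>i. \<Sum>k<?L. (- c k / c ?L) * (es ! k) i)"
    proof (rule ext)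
      fix i
      have "x i = - (\<Sum>k<?L. c k * (es ! k) i) / c ?L" using H2[of i] nz
        by (simp add: field_simps eq_neg_iff_add_eq_0 add.commute)
      also have "\<dots> = (\<Sum>k<?L. (- c k / c ?L) * (es ! k) i)"
        by (simp add: sum_divide_distrib sum_negf[symmetric])
      finally show "x i = (\<Sum>k<?L. (- c k / c ?L) * (es ! k) i)" .
    qed
    have ik: "inV (es ! k)" if "k < ?L" for k using ies that by auto
    have "trilin f x x x = trilin f (\<lambda>i. \<Sum>k<?L. (- c k / c ?L) * (es ! k) i) x x"
      by (subst xe) (rule refl)
    also have "\<dots> = (\<Sum>k<?L. (- c k / c ?L) * trilin f (es ! k) x x)"
      using ik by (intro trilin_sum1) auto
    also have "\<dots> = 0"
    proof (intro sum.neutral ballI)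
      fix k assume "k \<in> {..<?L}"
      then have k: "k < ?L" by simp
      have "trilin f (es ! k) x x = trilin f x (es ! k) x" using ik[OF k] ix by (rule trilin_swap12)
      also have "\<dots> = trilin f x x (es ! k)" using ik[OF k] ix by (rule trilin_swap23)
      also have "\<dots> = 0" using orth k by auto
      finally show "(- c k / c ?L) * trilin f (es ! k) x x = 0" by simp
    qed
    finally show False using c1 by simp
  qed
  then have "\<forall>i. (\<Sum>k<?L. c k * (es ! k) i) = 0" using H2 by simp
  then have "\<forall>k<?L. c k = 0" using ind unfolding lin_indep_list_def by blast
  then show "\<forall>k<length (es @ [x]). c k = 0" using cL by (auto simp: less_Suc_eq)
qed



theorem lemma5p5:
  fixes f :: "('i, 'k::field) series"
    and v :: "nat \<Rightarrow> 'i \<Rightarrow> 'k" and r :: nat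
    and n :: "nat \<Rightarrow> nat" and w :: "nat \<Rightarrow> nat \<Rightarrow> 'i \<Rightarrow> 'k"
    and u :: "nat \<Rightarrow> 'i \<Rightarrow> 'k" and m :: nat
  assumes "alg_closed_field TYPE('k)"
    and "(2::'k) \<noteq> 0" and "(3::'k) \<noteq> 0"
    and "homog 3 f"
    and "\<not> finite_strength 3 f"
    and "\<forall>j<r. inV (v j)"
    and "\<forall>c. finite_strength 2 (\<lambda>M. \<Sum>j<r. c j * dderiv (v j) f M) \<longrightarrow> (\<forall>j<r. c j = 0)"
    and "\<forall>x. inV x \<longrightarrow>
           (\<exists>c. finite_strength 2 (\<lambda>M. dderiv x f M - (\<Sum>j<r. c j * dderiv (v j) f M)))"
    and "good_table f v r n w u m"
  shows "\<exists>x. good_table f v r n w (u(m := x)) (Suc m)"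
proof -
  note ac = assms(1) and two = assms(2) and three = assms(3) and hf = assms(4) and nfs = assms(5)
    and iv = assms(6) and h7 = assms(7) and h8 = assms(8) and gt = assms(9)
  define es where "es = table_entries v r n w u m"
  define E where "E = set es"
  have gE: "\<forall>x\<in>E. inV x" and gind: "lin_indep_list es"
    and gvw: "\<forall>i<r. \<forall>j<n i. trilin f (v i) (w i j) (w i j) = 1"
    and gu: "\<forall>j<m. trilin f (u j) (u j) (u j) = 1"
    and gtri: "\<forall>x\<in>E. \<forall>y\<in>E. \<forall>z\<in>E. trilin f x y z \<noteq> 0 \<longrightarrow>
          (\<exists>i<r. \<exists>j<n i. perm3_of x y z (v i) (w i j))
        \<or> (\<exists>j<m. x = u j \<and> y = u j \<and> z = u j)
        \<or> (x \<in> v ` {..<r} \<and> y \<in> v ` {..<r} \<and> z \<in> v ` {..<r})"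
    and gfw: "\<forall>i<r. \<forall>j<n i. finite_strength 2 (dderiv (w i j) f)"
    and gfu: "\<forall>j<m. finite_strength 2 (dderiv (u j) f)"
    using gt unfolding good_table_def Let_def es_def E_def by auto
  have Eset: "E = v ` {..<r} \<union> {w i j | i j. i < r \<and> j < n i} \<union> u ` {..<m}"
    unfolding E_def es_def by (rule set_table)
  have Efs: "a \<in> v ` {..<r} \<or> finite_strength 2 (dderiv a f)" if "a \<in> E" for a
    using that gfw gfu unfolding Eset by auto
  define \<Phi>0 :: "(('i \<Rightarrow> 'k) \<Rightarrow> 'k) list" where
    "\<Phi>0 = map (\<lambda>j x. cfun f v r x j) [0..<r] @ map (\<lambda>ab x. trilin f x (fst ab) (snd ab)) (List.product es es)
       @ concat (map (\<lambda>a. if finite_strength 2 (dderiv a f) then Psi f a else []) es)"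
  have lf0: "\<forall>\<phi>\<in>set \<Phi>0. linfun \<phi>"
  proof
    fix \<phi> assume "\<phi> \<in> set \<Phi>0"
    then consider (c) j where "j < r" "\<phi> = (\<lambda>x. cfun f v r x j)"
      | (t) a b where "\<phi> = (\<lambda>x. trilin f x a b)"
      | (p) a where "a \<in> E" "finite_strength 2 (dderiv a f)" "\<phi> \<in> set (Psi f a)"
      unfolding \<Phi>0_def E_def by (auto split: if_splits)
    then show "linfun \<phi>"
    proof cases
      case c then show ?thesis using cfun_linfun[OF h7 h8] by simp
    next
      case t then show ?thesis using linfun_trilin by simp
    next
      case p then show ?thesis using Psi_spec[of a f] gE unfolding PsiP_def by auto
    qed
  qed
  have K: "\<forall>z. inV z \<longrightarrow> (\<forall>\<phi>\<in>set \<Phi>0. \<phi> z = 0) \<longrightarrow> finite_strength 2 (dderiv z f)"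
  proof (intro allI impI)
    fix z :: "'i \<Rightarrow> 'k" assume z: "inV z" "\<forall>\<phi>\<in>set \<Phi>0. \<phi> z = 0"
    have "\<forall>j<r. cfun f v r z j = 0"
    proof (intro allI impI)
      fix j assume "j < r"
      then have "(\<lambda>x. cfun f v r x j) \<in> set \<Phi>0" unfolding \<Phi>0_def by auto
      then show "cfun f v r z j = 0" using z(2) by auto
    qed
    then show "finite_strength 2 (dderiv z f)" using cfun_K[OF h8 z(1)] by simp
  qed
  obtain Z where Z: "\<forall>k<Suc r. inV (Z k) \<and> (\<forall>\<phi>\<in>set \<Phi>0. \<phi> (Z k) = 0) \<and> trilin f (Z k) (Z k) (Z k) \<noteq> 0
            \<and> (\<forall>l<k. \<forall>y. inV y \<longrightarrow> trilin f (Z l) (Z k) y = 0)"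
    using family[OF two three nfs hf lf0 K, of "Suc r"] by blast
  define S where "S = {..<Suc r}"
  have fS: "finite S" unfolding S_def by simp
  have iZ: "\<forall>k\<in>S. inV (Z k)" using Z unfolding S_def by auto
  have orth: "\<forall>k\<in>S. \<forall>l\<in>S. l \<noteq> k \<longrightarrow> (\<forall>y. inV y \<longrightarrow> trilin f (Z l) (Z k) y = 0)"
  proof (intro ballI impI allI)
    fix k l and y :: "'i \<Rightarrow> 'k" assume k: "k \<in> S" and l: "l \<in> S" and lk: "l \<noteq> k" and y: "inV y"
    show "trilin f (Z l) (Z k) y = 0"
    proof (cases "l < k")
      case True then show ?thesis using Z k y unfolding S_def by auto
    next
      case False
      then have "k < l" using lk by simp
      then have "trilin f (Z k) (Z l) y = 0" using Z l y unfolding S_def by auto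
      moreover have "trilin f (Z l) (Z k) y = trilin f (Z k) (Z l) y"
        using iZ k l by (intro trilin_swap12) auto
      ultimately show ?thesis by simp
    qed
  qed
  have CZ: "trilin f (Z k) (Z k) (Z k) \<noteq> 0" if "k \<in> S" for k using Z that unfolding S_def by auto
  have ZPhi: "\<phi> (Z k) = 0" if "k \<in> S" "\<phi> \<in> set \<Phi>0" for k \<phi> using Z that unfolding S_def by auto
  define G where "G = (\<lambda>k j. trilin f (Z k) (Z k) (v j))"
  obtain s where s: "\<exists>k\<in>S. s k \<noteq> 0" "\<forall>j<r. (\<Sum>k\<in>S. s k * G k j) = 0"
    using lin_dep[OF fS, of r G] unfolding S_def by auto
  then obtain k1 where k1: "k1 \<in> S" "s k1 \<noteq> 0" by blast
  define \<tau> where "\<tau> = (\<lambda>k. SOME b. b * b = s k)"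
  have \<tau>: "\<tau> k * \<tau> k = s k" for k unfolding \<tau>_def using sqrt_ex[OF ac] by (rule someI_ex)
  have \<tau>1: "\<tau> k1 \<noteq> 0" using \<tau>[of k1] k1(2) by auto
  define A where "A = (\<Sum>k\<in>S - {k1}. \<tau> k * \<tau> k * \<tau> k * trilin f (Z k) (Z k) (Z k))"
  define C1 where "C1 = trilin f (Z k1) (Z k1) (Z k1)"
  have C1: "C1 \<noteq> 0" unfolding C1_def using CZ k1(1) .
  obtain \<epsilon> :: 'k where eps: "\<epsilon> * \<epsilon> = 1" "A + (\<epsilon> * \<tau> k1) * (\<epsilon> * \<tau> k1) * (\<epsilon> * \<tau> k1) * C1 \<noteq> 0"
  proof (cases "A + \<tau> k1 * \<tau> k1 * \<tau> k1 * C1 = 0")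
    case False then show ?thesis using that[of 1] by simp
  next
    case True
    define X where "X = \<tau> k1 * \<tau> k1 * \<tau> k1 * C1"
    have X: "X \<noteq> 0" using \<tau>1 C1 unfolding X_def by simp
    have AX: "A + X = 0" using True unfolding X_def .
    have "A \<noteq> X"
    proof
      assume "A = X"
      then have "X + X = 0" using AX by simp
      then have "2 * X = 0" by (simp only: mult_2)
      then show False using X two by simp
    qed
    moreover have "(-1 * \<tau> k1) * (-1 * \<tau> k1) * (-1 * \<tau> k1) * C1 = - X" unfolding X_def by simp
    ultimately have "A + (-1 * \<tau> k1) * (-1 * \<tau> k1) * (-1 * \<tau> k1) * C1 \<noteq> 0"
      by (simp add: eq_neg_iff_add_eq_0[symmetric])
    moreover have "(-1::'k) * -1 = 1" by simp
    ultimately show ?thesis by (rule that[rotated])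
  qed
  define t where "t = \<tau>(k1 := \<epsilon> * \<tau> k1)"
  have tt: "t k * t k = s k" for k
    using \<tau>[of k] eps(1) unfolding t_def by (cases "k = k1") (auto simp: algebra_simps)
  define x0 where "x0 = (\<lambda>i. \<Sum>k\<in>S. t k * Z k i)"
  have ix0: "inV x0" unfolding x0_def using fS iZ by (intro inV_sum) auto
  have c0: "trilin f x0 x0 x0 \<noteq> 0"
  proof -
    have "trilin f x0 x0 x0 = (\<Sum>k\<in>S. t k * t k * t k * trilin f (Z k) (Z k) (Z k))"
      unfolding x0_def by (rule orth_cube[OF fS iZ orth])
    also have "\<dots> = t k1 * t k1 * t k1 * trilin f (Z k1) (Z k1) (Z k1)
        + (\<Sum>k\<in>S - {k1}. t k * t k * t k * trilin f (Z k) (Z k) (Z k))"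
      using fS k1(1) by (rule sum.remove)
    also have "(\<Sum>k\<in>S - {k1}. t k * t k * t k * trilin f (Z k) (Z k) (Z k)) = A"
      unfolding A_def t_def by (rule sum.cong) auto
    finally show ?thesis using eps(2) unfolding t_def C1_def by (simp add: add.commute)
  qed
  obtain lm :: 'k where lam: "lm * lm * lm = 1 / trilin f x0 x0 x0" using cbrt_ex[OF ac] by blast
  define x where "x = (\<lambda>i. lm * x0 i)"
  have ix: "inV x" unfolding x_def using ix0 by (rule inV_scale)
  have Tx: "trilin f x x x = 1"
    unfolding x_def using ix0 c0 lam
    by (simp add: trilin_scale1 trilin_scale2 trilin_scale3 mult.assoc[symmetric])
  have Phix: "\<phi> x = 0" if "\<phi> \<in> set \<Phi>0" for \<phi>
  proof -
    have l: "linfun \<phi>" using lf0 that by auto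
    have "\<phi> x0 = (\<Sum>k\<in>S. t k * \<phi> (Z k))" unfolding x0_def using l fS iZ by (intro linfun_sum) auto
    also have "\<dots> = 0" using ZPhi that by (intro sum.neutral) auto
    finally have "\<phi> x0 = 0" .
    then show ?thesis unfolding x_def using linfunD(2)[OF l ix0] by simp
  qed
  have T1: "trilin f x a b = 0" if "a \<in> E" "b \<in> E" for a b
  proof -
    have "(\<lambda>x. trilin f x a b) \<in> set \<Phi>0" using that unfolding \<Phi>0_def E_def by force
    then show ?thesis using Phix by fastforce
  qed
  have fsx: "finite_strength 2 (dderiv x f)" using K ix Phix by blast
  have T2: "trilin f x x a = 0" if a: "a \<in> E" for a
  proof (cases "a \<in> v ` {..<r}")
    case True
    then obtain j where j: "j < r" "a = v j" by auto
    have "trilin f x0 x0 (v j) = (\<Sum>k\<in>S. t k * t k * trilin f (Z k) (Z k) (v j))"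
      unfolding x0_def using iv j by (intro orth_quad[OF fS iZ orth]) auto
    also have "\<dots> = (\<Sum>k\<in>S. s k * G k j)" unfolding G_def using tt by simp
    also have "\<dots> = 0" using s(2) j by auto
    finally have "trilin f x0 x0 (v j) = 0" .
    then show ?thesis unfolding x_def j(2) using ix0 by (simp add: trilin_scale1 trilin_scale2)
  next
    case False
    then have fa: "finite_strength 2 (dderiv a f)" using Efs a by blast
    have ia: "inV a" using gE a by auto
    have PP: "PsiP f a (Psi f a)" by (rule Psi_spec[OF ia fa])
    have "set (Psi f a) \<subseteq> set \<Phi>0" using a fa unfolding \<Phi>0_def E_def by force
    then have "\<forall>\<psi>\<in>set (Psi f a). \<psi> x = 0" using Phix by auto
    then have "trilin f a x x = 0" using PP ix unfolding PsiP_def by blast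
    moreover have "trilin f x x a = trilin f x a x" using ix ia by (rule trilin_swap23)
    moreover have "trilin f x a x = trilin f a x x" using ix ia by (rule trilin_swap12)
    ultimately show ?thesis by simp
  qed
  show ?thesis
  proof (intro exI[of _ x])
    have E': "set (es @ [x]) = insert x E" unfolding E_def by auto
    have iE: "inV a" if "a \<in> E" for a using gE that by auto
    have T1': "trilin f x a b = 0 \<and> trilin f a x b = 0 \<and> trilin f a b x = 0" if "a \<in> E" "b \<in> E" for a b
    proof -
      have "trilin f x a b = 0" using T1 that by auto
      moreover have "trilin f a x b = trilin f x a b" using iE that ix by (intro trilin_swap12) auto
      moreover have "trilin f a b x = trilin f a x b" using iE that ix by (intro trilin_swap23) auto
      ultimately show ?thesis by simp
    qed
    have T2': "trilin f x x a = 0 \<and> trilin f x a x = 0 \<and> trilin f a x x = 0" if "a \<in> E" for a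
    proof -
      have "trilin f x x a = 0" using T2 that by auto
      moreover have "trilin f x a x = trilin f x x a" using iE that ix by (intro trilin_swap23) auto
      moreover have "trilin f a x x = trilin f x a x" using iE that ix by (intro trilin_swap12) auto
      ultimately show ?thesis by simp
    qed
    have old: "(\<exists>i<r. \<exists>j<n i. perm3_of a b c (v i) (w i j))
        \<or> (\<exists>j<Suc m. a = (u(m := x)) j \<and> b = (u(m := x)) j \<and> c = (u(m := x)) j)
        \<or> (a \<in> v ` {..<r} \<and> b \<in> v ` {..<r} \<and> c \<in> v ` {..<r})"
      if "a \<in> E" "b \<in> E" "c \<in> E" "trilin f a b c \<noteq> 0" for a b c
    proof -
      have "(\<exists>i<r. \<exists>j<n i. perm3_of a b c (v i) (w i j))
        \<or> (\<exists>j<m. a = u j \<and> b = u j \<and> c = u j)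
        \<or> (a \<in> v ` {..<r} \<and> b \<in> v ` {..<r} \<and> c \<in> v ` {..<r})"
        using gtri that by blast
      then show ?thesis
      proof (elim disjE)
        assume "\<exists>j<m. a = u j \<and> b = u j \<and> c = u j"
        then obtain j where "j < m" "a = u j" "b = u j" "c = u j" by blast
        then have "j < Suc m \<and> a = (u(m := x)) j \<and> b = (u(m := x)) j \<and> c = (u(m := x)) j" by simp
        then show ?thesis by blast
      qed auto
    qed
    show "good_table f v r n w (u(m := x)) (Suc m)"
      unfolding good_table_def Let_def table_snoc es_def[symmetric] E'
    proof (intro conjI)
      show "\<forall>y\<in>insert x E. inV y" using gE ix by auto
      show "lin_indep_list (es @ [x])"
        by (rule indep_ext[OF gind _ ix]) (use gE T2 Tx in \<open>auto simp: E_def\<close>)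
      show "\<forall>i<r. \<forall>j<n i. trilin f (v i) (w i j) (w i j) = 1" by (rule gvw)
      show "\<forall>j<Suc m. trilin f ((u(m := x)) j) ((u(m := x)) j) ((u(m := x)) j) = 1"
        using gu Tx by (auto simp: less_Suc_eq)
      show "\<forall>i<r. \<forall>j<n i. finite_strength 2 (dderiv (w i j) f)" by (rule gfw)
      show "\<forall>j<Suc m. finite_strength 2 (dderiv ((u(m := x)) j) f)"
        using gfu fsx by (auto simp: less_Suc_eq)
      show "\<forall>a\<in>insert x E. \<forall>b\<in>insert x E. \<forall>c\<in>insert x E. trilin f a b c \<noteq> 0 \<longrightarrow>
          (\<exists>i<r. \<exists>j<n i. perm3_of a b c (v i) (w i j))
        \<or> (\<exists>j<Suc m. a = (u(m := x)) j \<and> b = (u(m := x)) j \<and> c = (u(m := x)) j)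
        \<or> (a \<in> v ` {..<r} \<and> b \<in> v ` {..<r} \<and> c \<in> v ` {..<r})"
      proof (intro ballI impI)
        fix a b c assume a: "a \<in> insert x E" and b: "b \<in> insert x E" and c: "c \<in> insert x E"
          and nz: "trilin f a b c \<noteq> 0"
        show "(\<exists>i<r. \<exists>j<n i. perm3_of a b c (v i) (w i j))
        \<or> (\<exists>j<Suc m. a = (u(m := x)) j \<and> b = (u(m := x)) j \<and> c = (u(m := x)) j)
        \<or> (a \<in> v ` {..<r} \<and> b \<in> v ` {..<r} \<and> c \<in> v ` {..<r})"
        proof (cases "a = x \<and> b = x \<and> c = x")
          case True
          then have "m < Suc m \<and> a = (u(m := x)) m \<and> b = (u(m := x)) m \<and> c = (u(m := x)) m" by simp
          then show ?thesis by blast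
        next
          case False
          show ?thesis
          proof (cases "a \<in> E \<and> b \<in> E \<and> c \<in> E")
            case True then show ?thesis using old nz by blast
          next
            case nE: False
            have "trilin f a b c = 0"
            proof (cases "a = x")
              case ax: True
              show ?thesis
              proof (cases "b = x")
                case True
                then have "c \<in> E" using False ax c by auto
                then show ?thesis using T2' ax True by auto
              next
                case bx: False
                show ?thesis
                proof (cases "c = x")
                  case True then show ?thesis using T2' ax bx b by auto
                next
                  case False then show ?thesis using T1' ax bx b c by auto
                qed
              qed
            next
              case ax: False
              then have aE: "a \<in> E" using a by auto
              show ?thesis
              proof (cases "b = x")
                case bx: True
                show ?thesis
                proof (cases "c = x")
                  case True then show ?thesis using T2' aE bx by auto
                next
                  case False then show ?thesis using T1' aE bx c by auto
                qed
              next
                case bx: False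
                then have bE: "b \<in> E" using b by auto
                then have "c = x" using nE aE c by auto
                then show ?thesis using T1' aE bE by auto
              qed
            qed
            then show ?thesis using nz by simp
          qed
        qed
      qed
    qed
  qed
qed


end
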